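(* Let $d\in\mathbb N$, $\beta\in(1,\infty)$, $\mathsf Q=(2\beta-1)d+1$, and let $K_r,G^0_r,G^1_r,G^v_r$ be as in the context. For $h\in\mathbb R^d$ and a kernel $J$ let $\Delta_y^{-h}J(s,y,w):=J(s,y-h,w)-J(s,y,w)$. (i) For $\theta\in[1,\infty]$, $s\in(0,1)$, $h\in\mathbb R^d$: $\|\Delta_y^{-h}K_r\|_{\mathrm L^\theta}\lesssim|h|^s\,r^{\mathsf Q(\frac1\theta-1)-\beta s}$ for all $r>0$. (ii) If $s\in(0,\frac13)$, $\beta\in(\frac{1}{1-s},\frac{2}{1+s})$ and $$\theta_0(s)=\frac{\mathsf Q}{\mathsf Q+\beta-2+\beta s},\quad\theta_1(s)=\frac{\mathsf Q}{\mathsf Q-1+\beta s},\quad\theta_v(s)=\frac{\mathsf Q}{\mathsf Q+1-\beta+\beta s},$$ then, uniformly in $\tau>0$ and $h\in\mathbb R^d$, $$\Bigl\|\int_0^\tau\Delta_y^{-h}G^0_r\,\mathrm dr\Bigr\|_{\mathrm L^{\theta_0(s),\infty}}\lesssim|h|^s,\quad\Bigl\|\int_0^\tau\Delta_y^{-h}G^1_r\,\mathrm dr\Bigr\|_{\mathrm L^{\theta_1(s),\infty}}\lesssim|h|^s,\quad\Bigl\|\int_0^\tau\Delta_y^{-h}G^v_r\,\mathrm dr\Bigr\|_{\mathrm L^{\theta_v(s),\infty}}\lesssim|h|^s.$$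
   Context: All $2\times2$ matrices act on $\mathbb R^{2d}$ as their tensor product with $\mathrm{Id}_d$. Let $g_1(r)=r^\beta\sin\log r$, $g_2(r)=r^\beta\cos\log r$, $\mathcal W(r)=\begin{pmatrix}g_1&g_2\\ \dot g_1&\dot g_2\end{pmatrix}(r)$, $\mathcal D_\delta=\mathrm{diag}(\mathrm{Id}_d,\delta\,\mathrm{Id}_d)$, $\mathcal A_{m_0}(r)=\mathcal D_{m_0}^{-1}\mathcal W(r)$ and $\mathcal F_{m_0}(r)=(m_0^{-1}\ddot g_1(r)\ \ m_0^{-1}\ddot g_2(r))\in\mathbb R^{d\times 2d}$ for $m_0\ne0$. Let $c_0:=(-1)^d$. Fix a nonnegative $\psi\in C_c^\infty(\mathbb R^{1+2d})$ with unit mass and support in $(-2,-1)\times B_1(0)\times B_1(0)$; $\nabla_{x,v}\psi$ is its gradient in the last $2d$ variables. For $r>0$ and $(s,y,w)$ with $s\neq0$ (kernels $0$ at $s=0$), with $M:=\mathcal A_{s/r}(r)^{-1}$ and $M_{\cdot;2}$ its second block column: $K_r(s,y,w)=c_0^{-1}r^{-\mathsf Q}(s/r)^d\psi(s/r,M(y,w))$, $G^0_r(s,y,w)=c_0^{-1}(s/r)^{d+1}r^{-\mathsf Q}[\nabla_{x,v}\psi]^T(s/r,M(y,w))M_{\cdot;2}$, $G^1_r(s,y,w)=-c_0^{-1}(s/r)^{d+1}r^{-\mathsf Q}\psi(s/r,M(y,w))$, $G^v_r(s,y,w)=-c_0^{-1}(s/r)^{d}r^{-\mathsf Q}\psi(s/r,M(y,w))\mathcal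 F_{s/r}(r)M(y,w)$. Implicit constants in $\lesssim$ do not depend on $r,\tau,h$. The weak Lebesgue quasinorm is $\|J\|_{\mathrm L^{\theta,\infty}}=\sup_{\lambda>0}\lambda|\{|J|>\lambda\}|^{1/\theta}$. *)

theory Defs
  imports "HOL-Analysis.Analysis" "HOL-Probability.Essential_Supremum"
begin

type_synonym 'n pt = "real \<times> (real^'n) \<times> (real^'n)"

fun iterdd :: "'a::real_normed_vector list \<Rightarrow> ('a \<Rightarrow> real) \<Rightarrow> 'a \<Rightarrow> real" where
  "iterdd [] f = f"
| "iterdd (v # vs) f = (\<lambda>x. frechet_derivative (iterdd vs f) (at x) v)"

definition smooth_fun :: "('a::real_normed_vector \<Rightarrow> real) \<Rightarrow> bool" where
  "smooth_fun f \<longleftrightarrow> (\<forall>vs x. iterdd vs f differentiable (at x))"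

definition grad_x :: "('n::finite pt \<Rightarrow> real) \<Rightarrow> 'n pt \<Rightarrow> real^'n" where
  "grad_x \<psi> p = (\<chi> j. frechet_derivative \<psi> (at p) (0, axis j 1, 0))"

definition grad_v :: "('n::finite pt \<Rightarrow> real) \<Rightarrow> 'n pt \<Rightarrow> real^'n" where
  "grad_v \<psi> p = (\<chi> j. frechet_derivative \<psi> (at p) (0, 0, axis j 1))"

definition g1 :: "real \<Rightarrow> real \<Rightarrow> real" where
  "g1 \<beta> r = r powr \<beta> * sin (ln r)"

definition g2 :: "real \<Rightarrow> real \<Rightarrow> real" where
  "g2 \<beta> r = r powr \<beta> * cos (ln r)"

definition mat2 :: "real \<Rightarrow> real \<Rightarrow> real \<Rightarrow> real \<Rightarrow> real^2^2" where
  "mat2 a b c e = (\<chi> i j. if i = 1 then (if j = 1 then a else b) else (if j = 1 then c else e))"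

definition Wmat :: "real \<Rightarrow> real \<Rightarrow> real^2^2" where
  "Wmat \<beta> r = mat2 (g1 \<beta> r) (g2 \<beta> r) (deriv (g1 \<beta>) r) (deriv (g2 \<beta>) r)"

definition Dmat :: "real \<Rightarrow> real^2^2" where
  "Dmat \<delta> = mat2 1 0 0 \<delta>"

definition Amat :: "real \<Rightarrow> real \<Rightarrow> real \<Rightarrow> real^2^2" where
  "Amat \<beta> m0 r = matrix_inv (Dmat m0) ** Wmat \<beta> r"

definition Mmat :: "real \<Rightarrow> real \<Rightarrow> real \<Rightarrow> real^2^2" where
  "Mmat \<beta> m0 r = matrix_inv (Amat \<beta> m0 r)"

text \<open>Action of a 2x2 matrix (tensored with Id_d) on R^{2d}.\<close>
definition blk_app :: "real^2^2 \<Rightarrow> (real^'n) \<times> (real^'n) \<Rightarrow> (real^'n) \<times> (real^'n)" where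
  "blk_app M z = (M$1$1 *\<^sub>R fst z + M$1$2 *\<^sub>R snd z, M$2$1 *\<^sub>R fst z + M$2$2 *\<^sub>R snd z)"

definition F_app :: "real \<Rightarrow> real \<Rightarrow> real \<Rightarrow> (real^'n) \<times> (real^'n) \<Rightarrow> real^'n" where
  "F_app \<beta> m0 r z = (inverse m0 * deriv (deriv (g1 \<beta>)) r) *\<^sub>R fst z
                   + (inverse m0 * deriv (deriv (g2 \<beta>)) r) *\<^sub>R snd z"

definition Qdim :: "nat \<Rightarrow> real \<Rightarrow> real" where
  "Qdim d \<beta> = (2 * \<beta> - 1) * real d + 1"

definition c0 :: "nat \<Rightarrow> real" where
  "c0 d = (-1) ^ d"

definition Kr :: "('n::finite pt \<Rightarrow> real) \<Rightarrow> real \<Rightarrow> real \<Rightarrow> 'n pt \<Rightarrow> real" where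
  "Kr \<psi> \<beta> r p = (case p of (s, y, w) \<Rightarrow>
     if s = 0 then 0 else
     inverse (c0 CARD('n)) * r powr (- Qdim CARD('n) \<beta>) * (s / r) ^ CARD('n)
       * \<psi> (s / r, blk_app (Mmat \<beta> (s / r) r) (y, w)))"

definition G0r :: "('n::finite pt \<Rightarrow> real) \<Rightarrow> real \<Rightarrow> real \<Rightarrow> 'n pt \<Rightarrow> real^'n" where
  "G0r \<psi> \<beta> r p = (case p of (s, y, w) \<Rightarrow>
     if s = 0 then 0 else
     (let M = Mmat \<beta> (s / r) r; q = (s / r, blk_app M (y, w)) in
     (inverse (c0 CARD('n)) * (s / r) ^ (CARD('n) + 1) * r powr (- Qdim CARD('n) \<beta>))
       *\<^sub>R (M$1$2 *\<^sub>R grad_x \<psi> q + M$2$2 *\<^sub>R grad_v \<psi> q)))"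

definition G1r :: "('n::finite pt \<Rightarrow> real) \<Rightarrow> real \<Rightarrow> real \<Rightarrow> 'n pt \<Rightarrow> real" where
  "G1r \<psi> \<beta> r p = (case p of (s, y, w) \<Rightarrow>
     if s = 0 then 0 else
     - inverse (c0 CARD('n)) * (s / r) ^ (CARD('n) + 1) * r powr (- Qdim CARD('n) \<beta>)
       * \<psi> (s / r, blk_app (Mmat \<beta> (s / r) r) (y, w)))"

definition Gvr :: "('n::finite pt \<Rightarrow> real) \<Rightarrow> real \<Rightarrow> real \<Rightarrow> 'n pt \<Rightarrow> real^'n" where
  "Gvr \<psi> \<beta> r p = (case p of (s, y, w) \<Rightarrow>
     if s = 0 then 0 else
     (let z = blk_app (Mmat \<beta> (s / r) r) (y, w) in
     (- inverse (c0 CARD('n)) * (s / r) ^ CARD('n) * r powr (- Qdim CARD('n) \<beta>)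
       * \<psi> (s / r, z)) *\<^sub>R F_app \<beta> (s / r) r z))"

definition delta_y :: "real^'n \<Rightarrow> ('n pt \<Rightarrow> 'b::ab_group_add) \<Rightarrow> 'n pt \<Rightarrow> 'b" where
  "delta_y h J p = (case p of (s, y, w) \<Rightarrow> J (s, y - h, w) - J (s, y, w))"

definition ennpowr :: "ennreal \<Rightarrow> real \<Rightarrow> ennreal" where
  "ennpowr x p = (if x = \<infinity> then \<infinity> else ennreal (enn2real x powr p))"

definition Lnorm :: "ereal \<Rightarrow> ('a::euclidean_space \<Rightarrow> 'b::real_normed_vector) \<Rightarrow> ennreal" where
  "Lnorm \<theta> f = (if \<theta> = \<infinity> then e2ennreal (esssup lborel (\<lambda>x. ereal (norm (f x))))
     else ennpowr (\<integral>\<^sup>+ x. ennreal (norm (f x) powr real_of_ereal \<theta>) \<partial>lborel) (1 / real_of_ereal \<theta>))"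

definition wLnorm :: "real \<Rightarrow> ('a::euclidean_space \<Rightarrow> 'b::real_normed_vector) \<Rightarrow> ennreal" where
  "wLnorm \<theta> J = (SUP t\<in>{0<..}. ennreal t * ennpowr (emeasure lborel {x. t < norm (J x)}) (1 / \<theta>))"

definition recip :: "ereal \<Rightarrow> real" where
  "recip \<theta> = (if \<theta> = \<infinity> then 0 else 1 / real_of_ereal \<theta>)"

end

theory Submission
  imports Defs
begin

lemma matrix_inv_eq:
  fixes A :: "real^'n^'n"
  assumes "A ** B = mat 1" "B ** A = mat 1"
  shows "matrix_inv A = B"
proof -
  have ex: "\<exists>B'. A ** B' = mat 1 \<and> B' ** A = mat 1" using assms by blast
  define B' where "B' = matrix_inv A"
  have h: "A ** B' = mat 1 \<and> B' ** A = mat 1"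
    unfolding B'_def matrix_inv_def by (rule someI_ex[OF ex])
  have "B' = B' ** (A ** B)" using assms by (simp add: matrix_mul_rid)
  also have "\<dots> = (B' ** A) ** B" by (simp add: matrix_mul_assoc)
  also have "\<dots> = B" using h by (simp add: matrix_mul_lid)
  finally show ?thesis unfolding B'_def .
qed

lemma mat2_idx [simp]:
  "mat2 a b c e $ 1 $ 1 = a" "mat2 a b c e $ 1 $ 2 = b"
  "mat2 a b c e $ 2 $ 1 = c" "mat2 a b c e $ 2 $ 2 = e"
  by (simp_all add: mat2_def)

lemma mat2_mult:
  "mat2 a b c e ** mat2 a' b' c' e' = mat2 (a*a'+b*c') (a*b'+b*e') (c*a'+e*c') (c*b'+e*e')"
  unfolding matrix_matrix_mult_def
  by (simp add: vec_eq_iff forall_2 sum_2 mat2_def)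

lemma mat2_one: "mat 1 = mat2 1 0 0 1"
  by (simp add: vec_eq_iff forall_2 mat2_def mat_def)

lemma mat2_inv:
  assumes "a*e - b*c \<noteq> 0"
  shows "matrix_inv (mat2 a b c e) = mat2 (e/(a*e-b*c)) (-b/(a*e-b*c)) (-c/(a*e-b*c)) (a/(a*e-b*c))"
proof -
  let ?d = "a*e-b*c"
  show ?thesis
    apply (rule matrix_inv_eq)
     apply (simp_all add: mat2_mult mat2_one)
    using assms by (auto intro!: arg_cong4[where f=mat2] simp: divide_simps; algebra)+
qed


definition gd1 :: "real \<Rightarrow> real \<Rightarrow> real" where "gd1 \<beta> r = r powr (\<beta>-1) * (\<beta> * sin(ln r) + cos(ln r))"
definition gd2 :: "real \<Rightarrow> real \<Rightarrow> real" where "gd2 \<beta> r = r powr (\<beta>-1) * (\<beta> * cos(ln r) - sin(ln r))"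
definition gdd1 :: "real \<Rightarrow> real \<Rightarrow> real" where "gdd1 \<beta> r = r powr (\<beta>-2) * ((\<beta>-1)*(\<beta> * sin(ln r) + cos(ln r)) + (\<beta> * cos(ln r) - sin(ln r)))"
definition gdd2 :: "real \<Rightarrow> real \<Rightarrow> real" where "gdd2 \<beta> r = r powr (\<beta>-2) * ((\<beta>-1)*(\<beta> * cos(ln r) - sin(ln r)) - (\<beta> * sin(ln r) + cos(ln r)))"

lemma powr_div_r: "0 < (r::real) \<Longrightarrow> r powr a / r = r powr (a - 1)"
  using powr_diff[of r a 1] by simp

lemma powr_r_mult: "0 < (r::real) \<Longrightarrow> r * r powr (a - 1) = r powr a"
  using powr_add[of r 1 "a-1"] by simp

lemma powr_r_mult2: "0 < (r::real) \<Longrightarrow> r * r powr (a - 2) = r powr (a - 1)"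
  using powr_add[of r 1 "a-2"] by simp

lemma g1_deriv: "0 < r \<Longrightarrow> (g1 \<beta> has_real_derivative gd1 \<beta> r) (at r)"
  unfolding g1_def[abs_def] gd1_def
  apply (rule derivative_eq_intros refl | simp)+
  apply (simp add: powr_r_mult field_simps)
  done

lemma g2_deriv: "0 < r \<Longrightarrow> (g2 \<beta> has_real_derivative gd2 \<beta> r) (at r)"
  unfolding g2_def[abs_def] gd2_def
  apply (rule derivative_eq_intros refl | simp)+
  apply (simp add: powr_r_mult field_simps)
  done

lemma gd1_deriv: "0 < r \<Longrightarrow> (gd1 \<beta> has_real_derivative gdd1 \<beta> r) (at r)"
  unfolding gd1_def[abs_def] gdd1_def
  apply (rule derivative_eq_intros refl | simp)+
  apply (simp add: powr_r_mult2[symmetric] algebra_simps)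
  done

lemma gd2_deriv: "0 < r \<Longrightarrow> (gd2 \<beta> has_real_derivative gdd2 \<beta> r) (at r)"
  unfolding gd2_def[abs_def] gdd2_def
  apply (rule derivative_eq_intros refl | simp)+
  apply (simp add: powr_r_mult2[symmetric] algebra_simps)
  done

lemma deriv_g1: "0 < r \<Longrightarrow> deriv (g1 \<beta>) r = gd1 \<beta> r"
  using g1_deriv DERIV_imp_deriv by blast
lemma deriv_g2: "0 < r \<Longrightarrow> deriv (g2 \<beta>) r = gd2 \<beta> r"
  using g2_deriv DERIV_imp_deriv by blast

lemma deriv2_g1: assumes "0 < r" shows "deriv (deriv (g1 \<beta>)) r = gdd1 \<beta> r"
proof -
  have "eventually (\<lambda>x. deriv (g1 \<beta>) x = gd1 \<beta> x) (nhds r)"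
    using eventually_nhds_in_open[of "{0<..}" r] assms
    by (auto elim!: eventually_mono simp: deriv_g1)
  then have "deriv (deriv (g1 \<beta>)) r = deriv (gd1 \<beta>) r" by (rule deriv_cong_ev) simp
  also have "\<dots> = gdd1 \<beta> r" using gd1_deriv[OF assms] DERIV_imp_deriv by blast
  finally show ?thesis .
qed

lemma deriv2_g2: assumes "0 < r" shows "deriv (deriv (g2 \<beta>)) r = gdd2 \<beta> r"
proof -
  have "eventually (\<lambda>x. deriv (g2 \<beta>) x = gd2 \<beta> x) (nhds r)"
    using eventually_nhds_in_open[of "{0<..}" r] assms
    by (auto elim!: eventually_mono simp: deriv_g2)
  then have "deriv (deriv (g2 \<beta>)) r = deriv (gd2 \<beta>) r" by (rule deriv_cong_ev) simp
  also have "\<dots> = gdd2 \<beta> r" using gd2_deriv[OF assms] DERIV_imp_deriv by blast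
  finally show ?thesis .
qed


lemma det_W: assumes "0 < r"
  shows "g1 \<beta> r * gd2 \<beta> r - g2 \<beta> r * gd1 \<beta> r = - (r powr (2*\<beta>-1))"
proof -
  have e: "r powr \<beta> * r powr (\<beta> - 1) = r powr (2*\<beta>-1)"
    using powr_add[of r \<beta> "\<beta>-1"] by simp
  have "g1 \<beta> r * gd2 \<beta> r - g2 \<beta> r * gd1 \<beta> r
     = (r powr \<beta> * r powr (\<beta> - 1)) * (- (sin(ln r)^2 + cos(ln r)^2))"
    unfolding g1_def g2_def gd1_def gd2_def by algebra
  then show ?thesis using e by simp
qed

lemma Mmat_explicit:
  assumes r: "0 < r" and t: "t \<noteq> 0"
  shows "Mmat \<beta> t r = mat2 (- gd2 \<beta> r / r powr (2*\<beta>-1)) (t * g2 \<beta> r / r powr (2*\<beta>-1))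
                            (gd1 \<beta> r / r powr (2*\<beta>-1)) (- t * g1 \<beta> r / r powr (2*\<beta>-1))"
proof -
  have P: "r powr (2*\<beta>-1) > 0" using r by simp
  have D: "matrix_inv (Dmat t) = mat2 1 0 0 (1/t)"
    unfolding Dmat_def using mat2_inv[of 1 t 0 0] t by simp
  have W: "Wmat \<beta> r = mat2 (g1 \<beta> r) (g2 \<beta> r) (gd1 \<beta> r) (gd2 \<beta> r)"
    unfolding Wmat_def using deriv_g1[OF r] deriv_g2[OF r] by simp
  have A: "Amat \<beta> t r = mat2 (g1 \<beta> r) (g2 \<beta> r) (gd1 \<beta> r / t) (gd2 \<beta> r / t)"
    unfolding Amat_def D W mat2_mult by simp
  have dA: "g1 \<beta> r * (gd2 \<beta> r / t) - g2 \<beta> r * (gd1 \<beta> r / t) = - (r powr (2*\<beta>-1)) / t"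
  proof -
    have "g1 \<beta> r * (gd2 \<beta> r / t) - g2 \<beta> r * (gd1 \<beta> r / t) = (g1 \<beta> r * gd2 \<beta> r - g2 \<beta> r * gd1 \<beta> r) / t"
      by (simp add: diff_divide_distrib)
    then show ?thesis using det_W[OF r, of \<beta>] by simp
  qed
  have nz: "- (r powr (2*\<beta>-1)) / t \<noteq> 0" using P t by simp
  show ?thesis
    unfolding Mmat_def A mat2_inv[OF dA[THEN ssubst, of "\<lambda>x. x \<noteq> 0", OF nz]] dA
    using t P by (auto intro!: arg_cong4[where f=mat2] simp: field_simps)
qed


lemma sc_bound: fixes a b x :: real shows "\<bar>a * sin x + b * cos x\<bar> \<le> \<bar>a\<bar> + \<bar>b\<bar>"
proof -
  have "\<bar>a * sin x\<bar> \<le> \<bar>a\<bar>" using abs_sin_le_one[of x] by (simp add: abs_mult mult_left_le)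
  moreover have "\<bar>b * cos x\<bar> \<le> \<bar>b\<bar>" using abs_cos_le_one[of x] by (simp add: abs_mult mult_left_le)
  ultimately show ?thesis by linarith
qed

lemma g1_bound: "0 < r \<Longrightarrow> \<bar>g1 \<beta> r\<bar> \<le> r powr \<beta>"
  unfolding g1_def by (simp add: abs_mult mult_left_le)
lemma g2_bound: "0 < r \<Longrightarrow> \<bar>g2 \<beta> r\<bar> \<le> r powr \<beta>"
  unfolding g2_def by (simp add: abs_mult mult_left_le)

lemma gd1_bound: assumes "0 < r" "1 < \<beta>" shows "\<bar>gd1 \<beta> r\<bar> \<le> (\<beta>+1) * r powr (\<beta>-1)"
proof -
  have "\<bar>\<beta> * sin (ln r) + 1 * cos (ln r)\<bar> \<le> \<beta> + 1" using sc_bound[of \<beta> "ln r" 1] assms by simp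
  then show ?thesis unfolding gd1_def using assms
    by (simp add: abs_mult mult_right_mono mult.commute)
qed

lemma gd2_bound: assumes "0 < r" "1 < \<beta>" shows "\<bar>gd2 \<beta> r\<bar> \<le> (\<beta>+1) * r powr (\<beta>-1)"
proof -
  have "\<bar>(-1) * sin (ln r) + \<beta> * cos (ln r)\<bar> \<le> \<beta> + 1" using sc_bound[of "-1" "ln r" \<beta>] assms by simp
  then show ?thesis unfolding gd2_def using assms
    by (simp add: abs_mult mult_right_mono mult.commute)
qed

lemma gdd1_bound: assumes "0 < r" "1 < \<beta>" shows "\<bar>gdd1 \<beta> r\<bar> \<le> (\<beta>+1)^2 * r powr (\<beta>-2)"
proof -
  have e: "(\<beta>-1)*(\<beta> * sin(ln r) + cos(ln r)) + (\<beta> * cos(ln r) - sin(ln r))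
     = ((\<beta>-1)*\<beta> - 1) * sin (ln r) + (\<beta> - 1 + \<beta>) * cos (ln r)" by algebra
  have "\<bar>((\<beta>-1)*\<beta> - 1) * sin (ln r) + (\<beta> - 1 + \<beta>) * cos (ln r)\<bar> \<le> \<bar>(\<beta>-1)*\<beta> - 1\<bar> + \<bar>\<beta> - 1 + \<beta>\<bar>"
    by (rule sc_bound)
  also have "\<dots> \<le> (\<beta>+1)^2"
  proof -
    have p: "0 \<le> (\<beta>-1)*\<beta>" using assms by simp
    have "\<bar>(\<beta>-1)*\<beta> - 1\<bar> \<le> (\<beta>-1)*\<beta> + 1" using p by linarith
    moreover have "\<bar>\<beta> - 1 + \<beta>\<bar> = 2*\<beta> - 1" "\<bar>- (\<beta> - 1) - \<beta>\<bar> = 2*\<beta> - 1" using assms by linarith+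
    moreover have "(\<beta>-1)*\<beta> + 1 + (2*\<beta>-1) \<le> (\<beta>+1)^2" using assms by (simp add: power2_eq_square algebra_simps)
    ultimately show ?thesis by linarith
  qed
  finally show ?thesis unfolding gdd1_def e using assms
    by (simp add: abs_mult mult_right_mono mult.commute)
qed

lemma gdd2_bound: assumes "0 < r" "1 < \<beta>" shows "\<bar>gdd2 \<beta> r\<bar> \<le> (\<beta>+1)^2 * r powr (\<beta>-2)"
proof -
  have e: "(\<beta>-1)*(\<beta> * cos(ln r) - sin(ln r)) - (\<beta> * sin(ln r) + cos(ln r))
     = (- (\<beta> - 1) - \<beta>) * sin (ln r) + ((\<beta>-1)*\<beta> - 1) * cos (ln r)" by algebra
  have "\<bar>(- (\<beta> - 1) - \<beta>) * sin (ln r) + ((\<beta>-1)*\<beta> - 1) * cos (ln r)\<bar> \<le> \<bar>- (\<beta> - 1) - \<beta>\<bar> + \<bar>(\<beta>-1)*\<beta> - 1\<bar>"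
    by (rule sc_bound)
  also have "\<dots> \<le> (\<beta>+1)^2"
  proof -
    have p: "0 \<le> (\<beta>-1)*\<beta>" using assms by simp
    have "\<bar>(\<beta>-1)*\<beta> - 1\<bar> \<le> (\<beta>-1)*\<beta> + 1" using p by linarith
    moreover have "\<bar>\<beta> - 1 + \<beta>\<bar> = 2*\<beta> - 1" "\<bar>- (\<beta> - 1) - \<beta>\<bar> = 2*\<beta> - 1" using assms by linarith+
    moreover have "(\<beta>-1)*\<beta> + 1 + (2*\<beta>-1) \<le> (\<beta>+1)^2" using assms by (simp add: power2_eq_square algebra_simps)
    ultimately show ?thesis by linarith
  qed
  finally show ?thesis unfolding gdd2_def e using assms
    by (simp add: abs_mult mult_right_mono mult.commute)
qed

lemma powr_quot1: "0 < (r::real) \<Longrightarrow> r powr (\<beta>-1) / r powr (2*\<beta>-1) = r powr (-\<beta>)"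
  by (simp add: powr_diff[symmetric])
lemma powr_quot2: "0 < (r::real) \<Longrightarrow> r powr \<beta> / r powr (2*\<beta>-1) = r powr (1-\<beta>)"
  by (simp add: powr_diff[symmetric])


lemma M_entries:
  assumes r: "0 < r" and t: "-2 < t" "t < -1" and b: "1 < \<beta>"
  shows "\<bar>Mmat \<beta> t r $1$1\<bar> \<le> (\<beta>+1) * r powr (-\<beta>)"
    "\<bar>Mmat \<beta> t r $2$1\<bar> \<le> (\<beta>+1) * r powr (-\<beta>)"
    "\<bar>Mmat \<beta> t r $1$2\<bar> \<le> 2 * r powr (1-\<beta>)"
    "\<bar>Mmat \<beta> t r $2$2\<bar> \<le> 2 * r powr (1-\<beta>)"
proof -
  let ?P = "r powr (2*\<beta>-1)"
  have P: "?P > 0" using r by simp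
  have M: "Mmat \<beta> t r = mat2 (- gd2 \<beta> r / ?P) (t * g2 \<beta> r / ?P) (gd1 \<beta> r / ?P) (- t * g1 \<beta> r / ?P)"
    using Mmat_explicit[OF r] t by simp
  have at: "\<bar>t\<bar> \<le> 2" using t by simp
  show "\<bar>Mmat \<beta> t r $1$1\<bar> \<le> (\<beta>+1) * r powr (-\<beta>)"
  proof -
    have "\<bar>Mmat \<beta> t r $1$1\<bar> = \<bar>gd2 \<beta> r\<bar> / ?P" using P by (simp add: M abs_div)
    also have "\<dots> \<le> (\<beta>+1) * r powr (\<beta>-1) / ?P" using gd2_bound[OF r b] P by (simp add: divide_right_mono)
    also have "\<dots> = (\<beta>+1) * r powr (-\<beta>)" using powr_quot1[OF r, of \<beta>] by (metis times_divide_eq_right)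
    finally show ?thesis .
  qed
  show "\<bar>Mmat \<beta> t r $2$1\<bar> \<le> (\<beta>+1) * r powr (-\<beta>)"
  proof -
    have "\<bar>Mmat \<beta> t r $2$1\<bar> = \<bar>gd1 \<beta> r\<bar> / ?P" using P by (simp add: M abs_div)
    also have "\<dots> \<le> (\<beta>+1) * r powr (\<beta>-1) / ?P" using gd1_bound[OF r b] P by (simp add: divide_right_mono)
    also have "\<dots> = (\<beta>+1) * r powr (-\<beta>)" using powr_quot1[OF r, of \<beta>] by (metis times_divide_eq_right)
    finally show ?thesis .
  qed
  show "\<bar>Mmat \<beta> t r $1$2\<bar> \<le> 2 * r powr (1-\<beta>)"
  proof -
    have "\<bar>Mmat \<beta> t r $1$2\<bar> = \<bar>t\<bar> * \<bar>g2 \<beta> r\<bar> / ?P" using P by (simp add: M abs_div abs_mult)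
    also have "\<dots> \<le> 2 * r powr \<beta> / ?P" using g2_bound[OF r, of \<beta>] P at
      by (intro divide_right_mono mult_mono) auto
    also have "\<dots> = 2 * r powr (1-\<beta>)" using powr_quot2[OF r, of \<beta>] by (metis times_divide_eq_right)
    finally show ?thesis .
  qed
  show "\<bar>Mmat \<beta> t r $2$2\<bar> \<le> 2 * r powr (1-\<beta>)"
  proof -
    have "\<bar>Mmat \<beta> t r $2$2\<bar> = \<bar>t\<bar> * \<bar>g1 \<beta> r\<bar> / ?P" using P by (simp add: M abs_div abs_mult)
    also have "\<dots> \<le> 2 * r powr \<beta> / ?P" using g1_bound[OF r, of \<beta>] P at
      by (intro divide_right_mono mult_mono) auto
    also have "\<dots> = 2 * r powr (1-\<beta>)" using powr_quot2[OF r, of \<beta>] by (metis times_divide_eq_right)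
    finally show ?thesis .
  qed
qed

lemma blk_diff:
  "blk_app M (y - h, w) - blk_app M (y, w) = (- (M$1$1 *\<^sub>R h), - (M$2$1 *\<^sub>R h))"
  unfolding blk_app_def by (simp add: algebra_simps)

lemma blk_diff_norm:
  assumes r: "0 < r" and t: "-2 < t" "t < -1" and b: "1 < \<beta>"
  shows "norm (blk_app (Mmat \<beta> t r) (y - h, w) - blk_app (Mmat \<beta> t r) (y, w)) \<le> 2*(\<beta>+1) * r powr (-\<beta>) * norm h"
proof -
  let ?M = "Mmat \<beta> t r"
  have "norm (blk_app ?M (y - h, w) - blk_app ?M (y, w)) \<le> norm (?M$1$1 *\<^sub>R h) + norm (?M$2$1 *\<^sub>R h)"
    unfolding blk_diff using norm_Pair_le[of "- (?M$1$1 *\<^sub>R h)" "- (?M$2$1 *\<^sub>R h)"] by simp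
  also have "\<dots> = (\<bar>?M$1$1\<bar> + \<bar>?M$2$1\<bar>) * norm h" by (simp add: algebra_simps)
  also have "\<dots> \<le> ((\<beta>+1) * r powr (-\<beta>) + (\<beta>+1) * r powr (-\<beta>)) * norm h"
    using M_entries[OF r t b] by (intro mult_right_mono add_mono) auto
  finally show ?thesis by (simp add: algebra_simps)
qed

lemma blk_inv:
  assumes r: "0 < r" and t: "-2 < t" "t < -1" and b: "1 < \<beta>"
    and u: "norm (fst (blk_app (Mmat \<beta> t r) (y, w))) \<le> 1"
    and v: "norm (snd (blk_app (Mmat \<beta> t r) (y, w))) \<le> 1"
  shows "norm y \<le> 2 * r powr \<beta> \<and> norm w \<le> 2*(\<beta>+1) * r powr (\<beta>-1)"
proof -
  let ?P = "r powr (2*\<beta>-1)"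
  have P: "?P > 0" using r by simp
  define m11 where "m11 = - gd2 \<beta> r / ?P"
  define m12 where "m12 = t * g2 \<beta> r / ?P"
  define m21 where "m21 = gd1 \<beta> r / ?P"
  define m22 where "m22 = - t * g1 \<beta> r / ?P"
  have M: "Mmat \<beta> t r = mat2 m11 m12 m21 m22"
    using Mmat_explicit[OF r] t unfolding m11_def m12_def m21_def m22_def by simp
  define u where "u = m11 *\<^sub>R y + m12 *\<^sub>R w"
  define v where "v = m21 *\<^sub>R y + m22 *\<^sub>R w"
  have uv: "blk_app (Mmat \<beta> t r) (y, w) = (u, v)" unfolding M blk_app_def u_def v_def by simp
  have dW: "g1 \<beta> r * gd2 \<beta> r - g2 \<beta> r * gd1 \<beta> r = - ?P" by (rule det_W[OF r])
  have c1: "g1 \<beta> r * m11 + g2 \<beta> r * m21 = 1"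
    unfolding m11_def m21_def using dW P by (simp add: field_simps)
  have c2: "g1 \<beta> r * m12 + g2 \<beta> r * m22 = 0"
    unfolding m12_def m22_def using P by (simp add: field_simps)
  have c3: "gd1 \<beta> r * m11 + gd2 \<beta> r * m21 = 0"
    unfolding m11_def m21_def using P by (simp add: field_simps)
  have c4: "gd1 \<beta> r * m12 + gd2 \<beta> r * m22 = t"
    unfolding m12_def m22_def using dW P by (simp add: field_simps) (metis distrib_left)
  have ey: "y = g1 \<beta> r *\<^sub>R u + g2 \<beta> r *\<^sub>R v"
  proof -
    have "g1 \<beta> r *\<^sub>R u + g2 \<beta> r *\<^sub>R v = (g1 \<beta> r * m11 + g2 \<beta> r * m21) *\<^sub>R y + (g1 \<beta> r * m12 + g2 \<beta> r * m22) *\<^sub>R w"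
      unfolding u_def v_def by (simp add: algebra_simps)
    then show ?thesis using c1 c2 by simp
  qed
  have ew: "t *\<^sub>R w = gd1 \<beta> r *\<^sub>R u + gd2 \<beta> r *\<^sub>R v"
  proof -
    have "gd1 \<beta> r *\<^sub>R u + gd2 \<beta> r *\<^sub>R v = (gd1 \<beta> r * m11 + gd2 \<beta> r * m21) *\<^sub>R y + (gd1 \<beta> r * m12 + gd2 \<beta> r * m22) *\<^sub>R w"
      unfolding u_def v_def by (simp add: algebra_simps)
    then show ?thesis using c3 c4 by simp
  qed
  have nu: "norm u \<le> 1" and nv: "norm v \<le> 1" using u v uv by auto
  have "norm y \<le> \<bar>g1 \<beta> r\<bar> * norm u + \<bar>g2 \<beta> r\<bar> * norm v"
    using ey norm_triangle_ineq[of "g1 \<beta> r *\<^sub>R u" "g2 \<beta> r *\<^sub>R v"] by simp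
  also have "\<dots> \<le> r powr \<beta> * 1 + r powr \<beta> * 1"
    using g1_bound[OF r, of \<beta>] g2_bound[OF r, of \<beta>] nu nv
    by (intro add_mono mult_mono) auto
  finally have Y: "norm y \<le> 2 * r powr \<beta>" by simp
  have "norm w \<le> \<bar>t\<bar> * norm w"
  proof -
    have "1 \<le> \<bar>t\<bar>" using t by simp
    then show ?thesis using mult_right_mono[of 1 "\<bar>t\<bar>" "norm w"] by simp
  qed
  also have "\<dots> = norm (t *\<^sub>R w)" by simp
  also have "\<dots> \<le> \<bar>gd1 \<beta> r\<bar> * norm u + \<bar>gd2 \<beta> r\<bar> * norm v"
    unfolding ew using norm_triangle_ineq[of "gd1 \<beta> r *\<^sub>R u" "gd2 \<beta> r *\<^sub>R v"] by simp
  also have "\<dots> \<le> (\<beta>+1) * r powr (\<beta>-1) * 1 + (\<beta>+1) * r powr (\<beta>-1) * 1"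
    using gd1_bound[OF r b] gd2_bound[OF r b] nu nv
    by (intro add_mono mult_mono) auto
  finally have W: "norm w \<le> 2*(\<beta>+1) * r powr (\<beta>-1)" by (simp only: mult_1_right mult.assoc)
  show ?thesis using Y W by simp
qed

lemma F_lin: "F_app \<beta> t r z1 - F_app \<beta> t r z2 = F_app \<beta> t r (z1 - z2)"
  unfolding F_app_def by (simp add: algebra_simps)

lemma F_bound:
  assumes r: "0 < r" and t: "-2 < t" "t < -1" and b: "1 < \<beta>"
  shows "norm (F_app \<beta> t r z) \<le> (\<beta>+1)^2 * r powr (\<beta>-2) * (norm (fst z) + norm (snd z))"
proof -
  have it: "\<bar>inverse t\<bar> \<le> 1"
  proof -
    have "1 \<le> \<bar>t\<bar>" using t by simp
    then show ?thesis by (simp add: abs_inverse inverse_le_1_iff)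
  qed
  have a1: "\<bar>inverse t * gdd1 \<beta> r\<bar> \<le> (\<beta>+1)^2 * r powr (\<beta>-2)"
    using gdd1_bound[OF r b] it unfolding abs_mult
    by (metis abs_ge_zero mult_le_one mult_mono' mult_1 order_trans mult_left_le_one_le) 
  have a2: "\<bar>inverse t * gdd2 \<beta> r\<bar> \<le> (\<beta>+1)^2 * r powr (\<beta>-2)"
    using gdd2_bound[OF r b] it unfolding abs_mult
    by (metis abs_ge_zero mult_le_one mult_mono' mult_1 order_trans mult_left_le_one_le)
  have "norm (F_app \<beta> t r z) \<le> \<bar>inverse t * gdd1 \<beta> r\<bar> * norm (fst z) + \<bar>inverse t * gdd2 \<beta> r\<bar> * norm (snd z)"
    unfolding F_app_def deriv2_g1[OF r] deriv2_g2[OF r]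
    using norm_triangle_ineq[of "(inverse t * gdd1 \<beta> r) *\<^sub>R fst z" "(inverse t * gdd2 \<beta> r) *\<^sub>R snd z"]
    by simp
  also have "\<dots> \<le> (\<beta>+1)^2 * r powr (\<beta>-2) * norm (fst z) + (\<beta>+1)^2 * r powr (\<beta>-2) * norm (snd z)"
    using a1 a2 by (intro add_mono mult_right_mono) auto
  finally show ?thesis by (simp add: algebra_simps)
qed


lemma iterdd_zero_outside:
  fixes f :: "'a::real_normed_vector \<Rightarrow> real"
  assumes sm: "smooth_fun f" and K: "closed K" and z: "\<And>x. x \<notin> K \<Longrightarrow> f x = 0"
  shows "x \<notin> K \<Longrightarrow> iterdd vs f x = 0"
proof (induction vs arbitrary: x)
  case Nil then show ?case using z by simp
next
  case (Cons v vs)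
  have d: "(iterdd vs f has_derivative (\<lambda>_. 0)) (at x)"
  proof (rule has_derivative_transform_within_open[of "\<lambda>_. 0" "\<lambda>_. 0" x UNIV "-K"])
    show "((\<lambda>_. 0::real) has_derivative (\<lambda>_. 0)) (at x)" by simp
    show "open (- K)" using K by auto
    show "x \<in> - K" using Cons.prems by simp
    show "\<And>y. y \<in> - K \<Longrightarrow> 0 = iterdd vs f y" using Cons.IH by auto
  qed
  then have "(\<lambda>_. 0) = frechet_derivative (iterdd vs f) (at x)" by (rule frechet_derivative_at)
  then show ?case by (metis iterdd.simps(2))
qed

lemma iterdd_cont:
  assumes "smooth_fun f" shows "continuous_on UNIV (iterdd vs f)"
  using assms unfolding smooth_fun_def
  by (meson continuous_at_imp_continuous_on differentiable_imp_continuous_within)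

lemma iterdd_bounded:
  fixes f :: "'a::real_normed_vector \<Rightarrow> real"
  assumes sm: "smooth_fun f" and K: "compact K" and z: "\<And>x. x \<notin> K \<Longrightarrow> f x = 0"
  shows "\<exists>B. \<forall>x. \<bar>iterdd vs f x\<bar> \<le> B"
proof -
  have "compact (iterdd vs f ` K)"
    using compact_continuous_image[OF continuous_on_subset[OF iterdd_cont[OF sm]] K] by simp
  then obtain B where B: "\<And>y. y \<in> iterdd vs f ` K \<Longrightarrow> norm y \<le> B"
    using compact_imp_bounded bounded_iff by metis
  have "\<bar>iterdd vs f x\<bar> \<le> max B 0" for x
  proof (cases "x \<in> K")
    case True then show ?thesis using B[of "iterdd vs f x"] by auto
  next
    case False then show ?thesis using iterdd_zero_outside[OF sm compact_imp_closed[OF K] z] by simp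
  qed
  then show ?thesis by blast
qed

lemma iterdd_lipschitz:
  fixes f :: "'a::euclidean_space \<Rightarrow> real"
  assumes sm: "smooth_fun f" and K: "compact K" and z: "\<And>x. x \<notin> K \<Longrightarrow> f x = 0"
  shows "\<exists>L. \<forall>x y. \<bar>iterdd vs f x - iterdd vs f y\<bar> \<le> L * norm (x - y)"
proof -
  have "\<forall>i. \<exists>B. \<forall>x. \<bar>iterdd (i # vs) f x\<bar> \<le> B" using iterdd_bounded[OF sm K z] by blast
  then obtain Bf where Bf: "\<And>i x. \<bar>iterdd (i # vs) f x\<bar> \<le> Bf i" by metis
  define L where "L = (\<Sum>i\<in>Basis. Bf i)"
  let ?g = "iterdd vs f"
  let ?D = "\<lambda>x. frechet_derivative ?g (at x)"
  have der: "(?g has_derivative ?D x) (at x)" for x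
    using sm unfolding smooth_fun_def using frechet_derivative_works by blast
  have on: "onorm (?D x) \<le> L" for x
  proof (rule onorm_le)
    fix y :: 'a
    have lin: "linear (?D x)" using der[of x] has_derivative_linear by blast
    have "?D x y = ?D x (\<Sum>i\<in>Basis. (y \<bullet> i) *\<^sub>R i)" by (simp add: euclidean_representation)
    also have "\<dots> = (\<Sum>i\<in>Basis. (y \<bullet> i) * ?D x i)"
      using lin by (simp add: linear_sum linear_scale)
    finally have e: "?D x y = (\<Sum>i\<in>Basis. (y \<bullet> i) * iterdd (i # vs) f x)" by simp
    have "norm (?D x y) \<le> (\<Sum>i\<in>Basis. \<bar>(y \<bullet> i) * iterdd (i # vs) f x\<bar>)"
      unfolding e real_norm_def by (rule sum_abs)
    also have "\<dots> \<le> (\<Sum>i\<in>Basis. norm y * Bf i)"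
    proof (rule sum_mono)
      fix i :: 'a assume i: "i \<in> Basis"
      show "\<bar>(y \<bullet> i) * iterdd (i # vs) f x\<bar> \<le> norm y * Bf i"
        unfolding abs_mult using Basis_le_norm[OF i, of y] Bf[of i x]
        by (intro mult_mono) auto
    qed
    also have "\<dots> = L * norm y" unfolding L_def by (simp add: sum_distrib_left mult.commute)
    finally show "norm (?D x y) \<le> L * norm y" .
  qed
  have "\<bar>?g x - ?g y\<bar> \<le> L * norm (x - y)" for x y
    using differentiable_bound[of UNIV ?g ?D L x y] der on by auto
  then show ?thesis by blast
qed


lemma min_powr:
  fixes x A q s :: real
  assumes "0 \<le> x" "x \<le> A" "x \<le> A * q" "0 \<le> q" "0 < s" "s \<le> 1"
  shows "x \<le> A * q powr s"
proof (cases "1 \<le> q")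
  case True
  have "1 \<le> q powr s" using ge_one_powr_ge_zero[OF True] assms by simp
  moreover have "0 \<le> A" using assms by linarith
  ultimately have "A \<le> A * q powr s" using mult_left_mono[of 1 "q powr s" A] by simp
  then show ?thesis using assms by linarith
next
  case False
  show ?thesis
  proof (cases "q = 0")
    case True then show ?thesis using assms by simp
  next
    case q0: False
    have "q powr 1 \<le> q powr s" using powr_mono'[of s 1 q] assms False by simp
    then have "q \<le> q powr s" using assms q0 by simp
    moreover have "0 \<le> A" using assms by linarith
    ultimately show ?thesis using assms mult_left_mono[of q "q powr s" A] by linarith
  qed
qed

definition BoxS :: "real \<Rightarrow> real \<Rightarrow> real^'n \<Rightarrow> 'n pt set" where
  "BoxS \<beta> \<rho> h = {-\<rho>..0} \<times> (cball 0 (2 * \<rho> powr \<beta>) \<union> cball h (2 * \<rho> powr \<beta>))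
     \<times> cball 0 (2*(\<beta>+1) * \<rho> powr (\<beta>-1))"

definition kgood :: "real \<Rightarrow> (real \<Rightarrow> 'n pt \<Rightarrow> 'b::real_normed_vector) \<Rightarrow> real^'n \<Rightarrow> real \<Rightarrow> real \<Rightarrow> bool" where
  "kgood \<beta> D h a C \<longleftrightarrow>
     (\<forall>r p. 0 \<le> r \<longrightarrow> D r p \<noteq> 0 \<longrightarrow> 0 < r \<and> -2*r < fst p \<and> fst p < -r \<and> p \<in> BoxS \<beta> (- fst p) h) \<and>
     (\<forall>r p s. 0 < r \<longrightarrow> 0 < s \<longrightarrow> s \<le> 1 \<longrightarrow> norm (D r p) \<le> C * r powr (-a) * (norm h * r powr (-\<beta>)) powr s)"

locale psi_ctx =
  fixes \<psi> :: "'n::finite pt \<Rightarrow> real" and \<beta> :: real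
  assumes beta: "1 < \<beta>" and sm: "smooth_fun \<psi>"
    and supp: "closure {p. \<psi> p \<noteq> 0} \<subseteq> {-2<..<-1} \<times> ball 0 1 \<times> ball 0 1"
begin

definition "KK = closure {p. \<psi> p \<noteq> 0}"

lemma KK_compact: "compact KK"
proof -
  have "bounded ({-2<..<-1::real} \<times> ball (0::real^'n) 1 \<times> ball (0::real^'n) 1)"
    by (intro bounded_Times) auto
  then have "bounded KK" unfolding KK_def using supp bounded_subset by blast
  then show ?thesis unfolding KK_def using compact_eq_bounded_closed by blast
qed

lemma psi_out: "p \<notin> KK \<Longrightarrow> \<psi> p = 0"
proof (rule ccontr)
  assume a: "p \<notin> KK" "\<psi> p \<noteq> 0"
  then have "p \<in> {p. \<psi> p \<noteq> 0}" by simp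
  then have "p \<in> KK" unfolding KK_def by (rule subsetD[OF closure_subset])
  then show False using a by simp
qed

lemma KK_box: "p \<in> KK \<Longrightarrow> -2 < fst p \<and> fst p < -1 \<and> norm (fst (snd p)) < 1 \<and> norm (snd (snd p)) < 1"
proof -
  assume "p \<in> KK"
  then have "p \<in> {-2<..<-1} \<times> ball 0 1 \<times> ball 0 1" using supp unfolding KK_def by blast
  then show ?thesis by (cases p) (simp add: mem_ball_0)
qed

lemma iterdd_out: "p \<notin> KK \<Longrightarrow> iterdd vs \<psi> p = 0"
  using iterdd_zero_outside[OF sm compact_imp_closed[OF KK_compact] psi_out] by blast

lemma grad_x_comp: "grad_x \<psi> p $ j = iterdd [(0, axis j 1, 0)] \<psi> p"
  unfolding grad_x_def by simp
lemma grad_v_comp: "grad_v \<psi> p $ j = iterdd [(0, 0, axis j 1)] \<psi> p"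
  unfolding grad_v_def by simp

lemma iterdd_out1: "p \<notin> KK \<Longrightarrow> frechet_derivative \<psi> (at p) v = 0"
  using iterdd_out[of p "[v]"] by simp

lemma grad_out: "p \<notin> KK \<Longrightarrow> grad_x \<psi> p = 0 \<and> grad_v \<psi> p = 0"
  by (simp add: vec_eq_iff grad_x_def grad_v_def iterdd_out1)

lemma psi_bounds: "\<exists>B L. \<forall>p q. \<bar>\<psi> p\<bar> \<le> B \<and> \<bar>\<psi> p - \<psi> q\<bar> \<le> L * norm (p - q)"
proof -
  obtain B where B: "\<forall>x. \<bar>iterdd [] \<psi> x\<bar> \<le> B" using iterdd_bounded[OF sm KK_compact psi_out, of "[]"] by blast
  obtain L where L: "\<forall>x y. \<bar>iterdd [] \<psi> x - iterdd [] \<psi> y\<bar> \<le> L * norm (x - y)"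
    using iterdd_lipschitz[OF sm KK_compact psi_out, of "[]"] by blast
  have "\<forall>p q. \<bar>\<psi> p\<bar> \<le> B \<and> \<bar>\<psi> p - \<psi> q\<bar> \<le> L * norm (p - q)"
    using B L by simp
  then show ?thesis by blast
qed

lemma vec_bounds:
  fixes G :: "'n pt \<Rightarrow> real^'n" and e :: "'n \<Rightarrow> 'n pt"
  assumes G: "\<And>p j. G p $ j = iterdd [e j] \<psi> p"
  shows "\<exists>B L. \<forall>p q. norm (G p) \<le> B \<and> norm (G p - G q) \<le> L * norm (p - q)"
proof -
  have "\<forall>j. \<exists>B. \<forall>p. \<bar>iterdd [e j] \<psi> p\<bar> \<le> B"
    using iterdd_bounded[OF sm KK_compact psi_out] by blast
  then obtain Bf where Bf: "\<And>j p. \<bar>iterdd [e j] \<psi> p\<bar> \<le> Bf j" by metis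
  have "\<forall>j. \<exists>L. \<forall>p q. \<bar>iterdd [e j] \<psi> p - iterdd [e j] \<psi> q\<bar> \<le> L * norm (p - q)"
    using iterdd_lipschitz[OF sm KK_compact psi_out] by blast
  then obtain Lf where Lf: "\<And>j p q. \<bar>iterdd [e j] \<psi> p - iterdd [e j] \<psi> q\<bar> \<le> Lf j * norm (p - q)" by metis
  have nb: "norm (G p) \<le> (\<Sum>j\<in>UNIV. Bf j)" for p
  proof -
    have "norm (G p) \<le> (\<Sum>j\<in>UNIV. \<bar>G p $ j\<bar>)" by (rule norm_le_l1_cart)
    also have "\<dots> \<le> (\<Sum>j\<in>UNIV. Bf j)"
    proof (rule sum_mono)
      fix j show "\<bar>G p $ j\<bar> \<le> Bf j" unfolding G by (rule Bf)
    qed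
    finally show ?thesis .
  qed
  have nl: "norm (G p - G q) \<le> (\<Sum>j\<in>UNIV. Lf j) * norm (p - q)" for p q
  proof -
    have "norm (G p - G q) \<le> (\<Sum>j\<in>UNIV. \<bar>(G p - G q) $ j\<bar>)" by (rule norm_le_l1_cart)
    also have "\<dots> \<le> (\<Sum>j\<in>UNIV. Lf j * norm (p - q))"
    proof (rule sum_mono)
      fix j show "\<bar>(G p - G q) $ j\<bar> \<le> Lf j * norm (p - q)"
        unfolding vector_minus_component G by (rule Lf)
    qed
    finally show ?thesis by (simp add: sum_distrib_right)
  qed
  show ?thesis
    apply (rule exI[of _ "sum Bf UNIV"], rule exI[of _ "sum Lf UNIV"])
    apply (intro allI conjI)
     apply (rule nb)
    apply (rule nl)
    done
qed

lemma gradx_bounds: "\<exists>B L. \<forall>p q. norm (grad_x \<psi> p) \<le> B \<and> norm (grad_x \<psi> p - grad_x \<psi> q) \<le> L * norm (p - q)"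
  using vec_bounds[of "grad_x \<psi>" "\<lambda>j. (0, axis j 1, 0)", OF grad_x_comp] .
lemma gradv_bounds: "\<exists>B L. \<forall>p q. norm (grad_v \<psi> p) \<le> B \<and> norm (grad_v \<psi> p - grad_v \<psi> q) \<le> L * norm (p - q)"
  using vec_bounds[of "grad_v \<psi>" "\<lambda>j. (0, 0, axis j 1)", OF grad_v_comp] .

lemma supp_common:
  fixes y w h :: "real^'n"
  assumes r: "0 \<le> r"
    and K: "(\<sigma>/r, blk_app (Mmat \<beta> (\<sigma>/r) r) (y - h, w)) \<in> KK \<or> (\<sigma>/r, blk_app (Mmat \<beta> (\<sigma>/r) r) (y, w)) \<in> KK"
  shows "0 < r \<and> -2*r < \<sigma> \<and> \<sigma> < -r \<and> (\<sigma>, y, w) \<in> BoxS \<beta> (-\<sigma>) h"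
proof -
  let ?t = "\<sigma>/r"
  obtain q where q: "q \<in> KK" "fst q = ?t"
    using K by (metis fst_conv)
  have t: "-2 < ?t" "?t < -1" using KK_box[OF q(1)] q(2) by simp_all
  have r0: "0 < r"
  proof (rule ccontr)
    assume "\<not> 0 < r" then have "r = 0" using r by simp
    then show False using t by simp
  qed
  have s: "-2*r < \<sigma>" "\<sigma> < -r" using t r0 by (simp_all add: field_simps)
  have rs: "r \<le> -\<sigma>" using s by simp
  have p1: "2 * r powr \<beta> \<le> 2 * (-\<sigma>) powr \<beta>" using rs r0 beta by (simp add: powr_mono2)
  have p2: "2*(\<beta>+1) * r powr (\<beta>-1) \<le> 2*(\<beta>+1) * (-\<sigma>) powr (\<beta>-1)"
    using rs r0 beta by (simp add: powr_mono2)
  have yw: "(norm y \<le> 2 * r powr \<beta> \<or> norm (y - h) \<le> 2 * r powr \<beta>) \<and> norm w \<le> 2*(\<beta>+1) * r powr (\<beta>-1)"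
    using K
  proof
    assume "(?t, blk_app (Mmat \<beta> ?t r) (y - h, w)) \<in> KK"
    then have "norm (fst (blk_app (Mmat \<beta> ?t r) (y - h, w))) \<le> 1" "norm (snd (blk_app (Mmat \<beta> ?t r) (y - h, w))) \<le> 1"
      using KK_box[of "(?t, blk_app (Mmat \<beta> ?t r) (y - h, w))"] by (simp_all only: fst_conv snd_conv less_imp_le)
    then show ?thesis using blk_inv[OF r0 t beta] by blast
  next
    assume "(?t, blk_app (Mmat \<beta> ?t r) (y, w)) \<in> KK"
    then have "norm (fst (blk_app (Mmat \<beta> ?t r) (y, w))) \<le> 1" "norm (snd (blk_app (Mmat \<beta> ?t r) (y, w))) \<le> 1"
      using KK_box[of "(?t, blk_app (Mmat \<beta> ?t r) (y, w))"] by (simp_all only: fst_conv snd_conv less_imp_le)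
    then show ?thesis using blk_inv[OF r0 t beta] by blast
  qed
  have "(\<sigma>, y, w) \<in> BoxS \<beta> (-\<sigma>) h"
    unfolding BoxS_def using yw p1 p2 s r0 by (auto simp: dist_norm norm_minus_commute)
  then show ?thesis using r0 s by simp
qed

end


context psi_ctx begin

lemma norm_pair_same: "norm ((t::real, a) - (t, b)) = norm (a - b)"
  by (simp add: norm_Pair)

lemma scalar_kernel:
  fixes J :: "real \<Rightarrow> 'n pt \<Rightarrow> real" and c :: "real \<Rightarrow> real \<Rightarrow> real"
  assumes J: "\<And>r \<sigma> y w. J r (\<sigma>, y, w) = (if \<sigma> = 0 then 0 else c r \<sigma> * \<psi> (\<sigma>/r, blk_app (Mmat \<beta> (\<sigma>/r) r) (y, w)))"
    and cb: "\<And>r \<sigma>. 0 < r \<Longrightarrow> -2 < \<sigma>/r \<Longrightarrow> \<sigma>/r < -1 \<Longrightarrow> \<bar>c r \<sigma>\<bar> \<le> Cc * r powr (-a)"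
    and Cc: "0 \<le> Cc"
    and B: "\<And>p. \<bar>\<psi> p\<bar> \<le> B" and L: "\<And>p q. \<bar>\<psi> p - \<psi> q\<bar> \<le> L * norm (p - q)" and L0: "0 \<le> L"
  shows "kgood \<beta> (\<lambda>r. delta_y h (J r)) h a (Cc * max (2*B) (2*(\<beta>+1)*L))"
proof -
  define M0 where "M0 = max (2*B) (2*(\<beta>+1)*L)"
  have B0: "0 \<le> B" using B[of 0] by linarith
  have M00: "0 \<le> M0" unfolding M0_def using B0 by simp
  let ?q1 = "\<lambda>r \<sigma> y w. (\<sigma>/r, blk_app (Mmat \<beta> (\<sigma>/r) r) (y - h, w))"
  let ?q2 = "\<lambda>r \<sigma> y w. (\<sigma>/r, blk_app (Mmat \<beta> (\<sigma>/r) r) (y, w))"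
  have D: "delta_y h (J r) (\<sigma>, y, w) = (if \<sigma> = 0 then 0 else c r \<sigma> * (\<psi> (?q1 r \<sigma> y w) - \<psi> (?q2 r \<sigma> y w)))"
    for r \<sigma> y w unfolding delta_y_def J by (simp add: algebra_simps)
  have D0: "delta_y h (J r) (\<sigma>, y, w) = 0" if "?q1 r \<sigma> y w \<notin> KK" "?q2 r \<sigma> y w \<notin> KK" for r \<sigma> y w
    unfolding D using psi_out[OF that(1)] psi_out[OF that(2)] by simp
  have part1: "0 < r \<and> -2*r < fst p \<and> fst p < -r \<and> p \<in> BoxS \<beta> (- fst p) h"
    if r: "0 \<le> r" and nz: "delta_y h (J r) p \<noteq> 0" for r p
  proof -
    obtain \<sigma> y w where p: "p = (\<sigma>, y, w)" by (cases p) auto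
    have "?q1 r \<sigma> y w \<in> KK \<or> ?q2 r \<sigma> y w \<in> KK"
    proof (rule ccontr)
      assume "\<not> (?q1 r \<sigma> y w \<in> KK \<or> ?q2 r \<sigma> y w \<in> KK)"
      then have "?q1 r \<sigma> y w \<notin> KK" "?q2 r \<sigma> y w \<notin> KK" by simp_all
      then have "delta_y h (J r) (\<sigma>, y, w) = 0" by (rule D0)
      then show False using nz p by simp
    qed
    from supp_common[OF r this] show ?thesis using p by simp
  qed
  have part2: "norm (delta_y h (J r) p) \<le> (Cc * M0) * r powr (-a) * (norm h * r powr (-\<beta>)) powr s"
    if r: "0 < r" and s: "0 < s" "s \<le> 1" for r p s
  proof -
    obtain \<sigma> y w where p: "p = (\<sigma>, y, w)" by (cases p) auto
    have rhs0: "0 \<le> (Cc * M0) * r powr (-a) * (norm h * r powr (-\<beta>)) powr s"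
      using Cc M00 by simp
    show ?thesis
    proof (cases "\<sigma> = 0 \<or> (?q1 r \<sigma> y w \<notin> KK \<and> ?q2 r \<sigma> y w \<notin> KK)")
      case c: True
      have "delta_y h (J r) p = 0"
      proof (cases "\<sigma> = 0")
        case True then show ?thesis unfolding p D by simp
      next
        case False
        then have "?q1 r \<sigma> y w \<notin> KK" "?q2 r \<sigma> y w \<notin> KK" using c by simp_all
        then show ?thesis unfolding p by (rule D0)
      qed
      then show ?thesis using rhs0 by simp
    next
      case False
      then have s0: "\<sigma> \<noteq> 0" and K: "?q1 r \<sigma> y w \<in> KK \<or> ?q2 r \<sigma> y w \<in> KK" by auto
      obtain q where q: "q \<in> KK" "fst q = \<sigma>/r" using K by (metis fst_conv)
      have t: "-2 < \<sigma>/r" "\<sigma>/r < -1" using KK_box[OF q(1)] q(2) by simp_all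
      let ?X = "\<bar>\<psi> (?q1 r \<sigma> y w) - \<psi> (?q2 r \<sigma> y w)\<bar>"
      let ?Q = "norm h * r powr (-\<beta>)"
      have X1: "?X \<le> M0"
      proof -
        have "?X \<le> \<bar>\<psi> (?q1 r \<sigma> y w)\<bar> + \<bar>\<psi> (?q2 r \<sigma> y w)\<bar>" by linarith
        also have "\<dots> \<le> 2*B" using B[of "?q1 r \<sigma> y w"] B[of "?q2 r \<sigma> y w"] by linarith
        finally show ?thesis unfolding M0_def by simp
      qed
      have X2: "?X \<le> M0 * ?Q"
      proof -
        have "?X \<le> L * norm (?q1 r \<sigma> y w - ?q2 r \<sigma> y w)" by (rule L)
        also have "\<dots> = L * norm (blk_app (Mmat \<beta> (\<sigma>/r) r) (y - h, w) - blk_app (Mmat \<beta> (\<sigma>/r) r) (y, w))"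
          by (simp only: norm_pair_same)
        also have "\<dots> \<le> (2*(\<beta>+1)*L) * ?Q"
        proof -
          have "L * norm (blk_app (Mmat \<beta> (\<sigma>/r) r) (y - h, w) - blk_app (Mmat \<beta> (\<sigma>/r) r) (y, w))
              \<le> L * (2*(\<beta>+1) * r powr (-\<beta>) * norm h)"
            by (rule mult_left_mono[OF blk_diff_norm[OF r t beta] L0])
          also have "\<dots> = (2*(\<beta>+1)*L) * ?Q" by (simp add: ac_simps)
          finally show ?thesis .
        qed
        also have "\<dots> \<le> M0 * ?Q" unfolding M0_def by (intro mult_right_mono) auto
        finally show ?thesis .
      qed
      have cbd: "\<bar>c r \<sigma>\<bar> \<le> Cc * r powr (-a)" by (rule cb[OF r t])
      have N: "norm (delta_y h (J r) p) = \<bar>c r \<sigma>\<bar> * ?X" unfolding p D using s0 by (simp add: abs_mult)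
      have "norm (delta_y h (J r) p) \<le> (Cc * r powr (-a) * M0) * ?Q powr s"
      proof (rule min_powr)
        show "0 \<le> norm (delta_y h (J r) p)" by simp
        show "norm (delta_y h (J r) p) \<le> Cc * r powr (-a) * M0"
          unfolding N by (rule mult_mono[OF cbd X1]) (use Cc in auto)
        show "norm (delta_y h (J r) p) \<le> Cc * r powr (-a) * M0 * ?Q"
        proof -
          have "0 \<le> Cc * r powr (-a)" using Cc by simp
          then have "\<bar>c r \<sigma>\<bar> * ?X \<le> Cc * r powr (-a) * (M0 * ?Q)" by (rule mult_mono[OF cbd X2]) simp
          then show ?thesis unfolding N by (simp only: mult.assoc)
        qed
        show "0 \<le> ?Q" by simp
      qed (use s in auto)
      then show ?thesis by (simp add: ac_simps)
    qed
  qed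
  show ?thesis unfolding kgood_def M0_def[symmetric] using part1 part2 by blast
qed

lemma abs_c0': "\<bar>c0 n\<bar> = 1"
  unfolding c0_def by (simp add: power_abs)
lemma abs_c0: "\<bar>inverse (c0 n)\<bar> = 1"
  by (simp add: abs_c0')

lemma abs_t_pow: fixes t :: real assumes "-2 < t" "t < -1" shows "\<bar>t ^ n\<bar> \<le> 2 ^ n"
proof -
  have "\<bar>t\<bar> \<le> 2" using assms by (simp add: abs_if)
  then have "\<bar>t\<bar> ^ n \<le> 2 ^ n" by (rule power_mono) simp
  then show ?thesis by (simp add: power_abs)
qed

lemma K_kgood:
  assumes B: "\<And>p. \<bar>\<psi> p\<bar> \<le> B" and L: "\<And>p q. \<bar>\<psi> p - \<psi> q\<bar> \<le> L * norm (p - q)" and L0: "0 \<le> L"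
  shows "kgood \<beta> (\<lambda>r. delta_y h (Kr \<psi> \<beta> r)) h (Qdim CARD('n) \<beta>) (2 ^ CARD('n) * max (2*B) (2*(\<beta>+1)*L))"
proof (rule scalar_kernel[where c = "\<lambda>r \<sigma>. inverse (c0 CARD('n)) * r powr (- Qdim CARD('n) \<beta>) * (\<sigma>/r) ^ CARD('n)"])
  show "\<And>r \<sigma> y w. Kr \<psi> \<beta> r (\<sigma>, y, w) = (if \<sigma> = 0 then 0 else inverse (c0 CARD('n)) * r powr (- Qdim CARD('n) \<beta>) * (\<sigma>/r) ^ CARD('n) * \<psi> (\<sigma>/r, blk_app (Mmat \<beta> (\<sigma>/r) r) (y, w)))"
    by (simp add: Kr_def)
  show "\<bar>inverse (c0 CARD('n)) * r powr (- Qdim CARD('n) \<beta>) * (\<sigma>/r) ^ CARD('n)\<bar> \<le> 2 ^ CARD('n) * r powr (- Qdim CARD('n) \<beta>)"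
    if "0 < r" "-2 < \<sigma>/r" "\<sigma>/r < -1" for r \<sigma>
  proof -
    have "\<bar>inverse (c0 CARD('n)) * r powr (- Qdim CARD('n) \<beta>) * (\<sigma>/r) ^ CARD('n)\<bar> = r powr (- Qdim CARD('n) \<beta>) * \<bar>(\<sigma>/r) ^ CARD('n)\<bar>"
      by (simp only: abs_mult abs_c0 mult_1_left abs_of_nonneg[OF powr_ge_zero])
    also have "\<dots> \<le> r powr (- Qdim CARD('n) \<beta>) * 2 ^ CARD('n)"
      by (rule mult_left_mono[OF abs_t_pow[OF that(2,3)]]) simp
    finally show ?thesis by (simp only: mult.commute)
  qed
qed (use B L L0 in auto)

lemma G1_kgood:
  assumes B: "\<And>p. \<bar>\<psi> p\<bar> \<le> B" and L: "\<And>p q. \<bar>\<psi> p - \<psi> q\<bar> \<le> L * norm (p - q)" and L0: "0 \<le> L"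
  shows "kgood \<beta> (\<lambda>r. delta_y h (G1r \<psi> \<beta> r)) h (Qdim CARD('n) \<beta>) (2 ^ (CARD('n)+1) * max (2*B) (2*(\<beta>+1)*L))"
proof (rule scalar_kernel[where c = "\<lambda>r \<sigma>. - inverse (c0 CARD('n)) * (\<sigma>/r) ^ (CARD('n) + 1) * r powr (- Qdim CARD('n) \<beta>)"])
  show "\<And>r \<sigma> y w. G1r \<psi> \<beta> r (\<sigma>, y, w) = (if \<sigma> = 0 then 0 else - inverse (c0 CARD('n)) * (\<sigma>/r) ^ (CARD('n) + 1) * r powr (- Qdim CARD('n) \<beta>) * \<psi> (\<sigma>/r, blk_app (Mmat \<beta> (\<sigma>/r) r) (y, w)))"
    by (simp add: G1r_def)
  show "\<bar>- inverse (c0 CARD('n)) * (\<sigma>/r) ^ (CARD('n) + 1) * r powr (- Qdim CARD('n) \<beta>)\<bar> \<le> 2 ^ (CARD('n)+1) * r powr (- Qdim CARD('n) \<beta>)"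
    if "0 < r" "-2 < \<sigma>/r" "\<sigma>/r < -1" for r \<sigma>
  proof -
    have "\<bar>- inverse (c0 CARD('n)) * (\<sigma>/r) ^ (CARD('n) + 1) * r powr (- Qdim CARD('n) \<beta>)\<bar> = \<bar>(\<sigma>/r) ^ (CARD('n) + 1)\<bar> * r powr (- Qdim CARD('n) \<beta>)"
      by (simp only: abs_mult abs_minus_cancel abs_c0 mult_1_left abs_of_nonneg[OF powr_ge_zero])
    also have "\<dots> \<le> 2 ^ (CARD('n)+1) * r powr (- Qdim CARD('n) \<beta>)"
      by (rule mult_right_mono[OF abs_t_pow[OF that(2,3)]]) simp
    finally show ?thesis .
  qed
qed (use B L L0 in auto)

end

context psi_ctx begin

lemma powr_comb: "0 < (r::real) \<Longrightarrow> r powr (-Q) * r powr e = r powr (-(Q - e))"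
  by (simp add: powr_add[symmetric])

lemma G0_kgood:
  assumes Bx: "\<And>p. norm (grad_x \<psi> p) \<le> Bg" and Lx: "\<And>p q. norm (grad_x \<psi> p - grad_x \<psi> q) \<le> Lg * norm (p - q)"
    and Bv: "\<And>p. norm (grad_v \<psi> p) \<le> Bg" and Lv: "\<And>p q. norm (grad_v \<psi> p - grad_v \<psi> q) \<le> Lg * norm (p - q)"
    and L0: "0 \<le> Lg"
  shows "kgood \<beta> (\<lambda>r. delta_y h (G0r \<psi> \<beta> r)) h (Qdim CARD('n) \<beta> + \<beta> - 1)
           (2 ^ (CARD('n)+1) * 4 * max (2*Bg) (2*(\<beta>+1)*Lg))"
proof -
  define M0 where "M0 = max (2*Bg) (2*(\<beta>+1)*Lg)"
  define Q where "Q = Qdim CARD('n) \<beta>"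
  have B0: "0 \<le> Bg" using Bx[of 0] by (meson norm_ge_zero order_trans)
  have M00: "0 \<le> M0" unfolding M0_def using B0 by simp
  let ?q1 = "\<lambda>r \<sigma> y w. (\<sigma>/r, blk_app (Mmat \<beta> (\<sigma>/r) r) (y - h, w))"
  let ?q2 = "\<lambda>r \<sigma> y w. (\<sigma>/r, blk_app (Mmat \<beta> (\<sigma>/r) r) (y, w))"
  let ?k = "\<lambda>r \<sigma>. inverse (c0 CARD('n)) * (\<sigma>/r) ^ (CARD('n) + 1) * r powr (- Q)"
  have D: "delta_y h (G0r \<psi> \<beta> r) (\<sigma>, y, w) = (if \<sigma> = 0 then 0 else ?k r \<sigma> *\<^sub>R
      (Mmat \<beta> (\<sigma>/r) r $1$2 *\<^sub>R (grad_x \<psi> (?q1 r \<sigma> y w) - grad_x \<psi> (?q2 r \<sigma> y w))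
     + Mmat \<beta> (\<sigma>/r) r $2$2 *\<^sub>R (grad_v \<psi> (?q1 r \<sigma> y w) - grad_v \<psi> (?q2 r \<sigma> y w))))"
    for r \<sigma> y w unfolding delta_y_def G0r_def Q_def by (simp add: Let_def algebra_simps)
  have D0: "delta_y h (G0r \<psi> \<beta> r) (\<sigma>, y, w) = 0" if "?q1 r \<sigma> y w \<notin> KK" "?q2 r \<sigma> y w \<notin> KK" for r \<sigma> y w
    unfolding D using grad_out[OF that(1)] grad_out[OF that(2)] by simp
  have part1: "0 < r \<and> -2*r < fst p \<and> fst p < -r \<and> p \<in> BoxS \<beta> (- fst p) h"
    if r: "0 \<le> r" and nz: "delta_y h (G0r \<psi> \<beta> r) p \<noteq> 0" for r p
  proof -
    obtain \<sigma> y w where p: "p = (\<sigma>, y, w)" by (cases p) auto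
    have "?q1 r \<sigma> y w \<in> KK \<or> ?q2 r \<sigma> y w \<in> KK"
    proof (rule ccontr)
      assume "\<not> (?q1 r \<sigma> y w \<in> KK \<or> ?q2 r \<sigma> y w \<in> KK)"
      then have "?q1 r \<sigma> y w \<notin> KK" "?q2 r \<sigma> y w \<notin> KK" by simp_all
      then have "delta_y h (G0r \<psi> \<beta> r) (\<sigma>, y, w) = 0" by (rule D0)
      then show False using nz p by simp
    qed
    from supp_common[OF r this] show ?thesis using p by simp
  qed
  have part2: "norm (delta_y h (G0r \<psi> \<beta> r) p) \<le> (2 ^ (CARD('n)+1) * 4 * M0) * r powr (-(Q + \<beta> - 1)) * (norm h * r powr (-\<beta>)) powr s"
    if r: "0 < r" and s: "0 < s" "s \<le> 1" for r p s
  proof -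
    obtain \<sigma> y w where p: "p = (\<sigma>, y, w)" by (cases p) auto
    have rhs0: "0 \<le> (2 ^ (CARD('n)+1) * 4 * M0) * r powr (-(Q + \<beta> - 1)) * (norm h * r powr (-\<beta>)) powr s"
      using M00 by simp
    show ?thesis
    proof (cases "\<sigma> = 0 \<or> (?q1 r \<sigma> y w \<notin> KK \<and> ?q2 r \<sigma> y w \<notin> KK)")
      case c: True
      have "delta_y h (G0r \<psi> \<beta> r) p = 0"
      proof (cases "\<sigma> = 0")
        case True then show ?thesis unfolding p D by simp
      next
        case False
        then have "?q1 r \<sigma> y w \<notin> KK" "?q2 r \<sigma> y w \<notin> KK" using c by simp_all
        then show ?thesis unfolding p by (rule D0)
      qed
      then show ?thesis using rhs0 by simp
    next
      case False
      then have s0: "\<sigma> \<noteq> 0" and K: "?q1 r \<sigma> y w \<in> KK \<or> ?q2 r \<sigma> y w \<in> KK" by auto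
      obtain q where q: "q \<in> KK" "fst q = \<sigma>/r" using K by (metis fst_conv)
      have t: "-2 < \<sigma>/r" "\<sigma>/r < -1" using KK_box[OF q(1)] q(2) by simp_all
      let ?Q = "norm h * r powr (-\<beta>)"
      let ?n = "norm (blk_app (Mmat \<beta> (\<sigma>/r) r) (y - h, w) - blk_app (Mmat \<beta> (\<sigma>/r) r) (y, w))"
      have nb: "Lg * ?n \<le> (2*(\<beta>+1)*Lg) * ?Q"
      proof -
        have "Lg * ?n \<le> Lg * (2*(\<beta>+1) * r powr (-\<beta>) * norm h)"
          by (rule mult_left_mono[OF blk_diff_norm[OF r t beta] L0])
        also have "\<dots> = (2*(\<beta>+1)*Lg) * ?Q" by (simp add: ac_simps)
        finally show ?thesis .
      qed
      have qd: "norm (?q1 r \<sigma> y w - ?q2 r \<sigma> y w) = ?n" by (simp only: norm_pair_same)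
      let ?Xx = "norm (grad_x \<psi> (?q1 r \<sigma> y w) - grad_x \<psi> (?q2 r \<sigma> y w))"
      let ?Xv = "norm (grad_v \<psi> (?q1 r \<sigma> y w) - grad_v \<psi> (?q2 r \<sigma> y w))"
      have Xx1: "?Xx \<le> M0"
      proof -
        have "?Xx \<le> norm (grad_x \<psi> (?q1 r \<sigma> y w)) + norm (grad_x \<psi> (?q2 r \<sigma> y w))" by (rule norm_triangle_ineq4)
        also have "\<dots> \<le> 2*Bg" using Bx[of "?q1 r \<sigma> y w"] Bx[of "?q2 r \<sigma> y w"] by linarith
        finally show ?thesis unfolding M0_def by simp
      qed
      have Xv1: "?Xv \<le> M0"
      proof -
        have "?Xv \<le> norm (grad_v \<psi> (?q1 r \<sigma> y w)) + norm (grad_v \<psi> (?q2 r \<sigma> y w))" by (rule norm_triangle_ineq4)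
        also have "\<dots> \<le> 2*Bg" using Bv[of "?q1 r \<sigma> y w"] Bv[of "?q2 r \<sigma> y w"] by linarith
        finally show ?thesis unfolding M0_def by simp
      qed
      have M0Q: "(2*(\<beta>+1)*Lg) * ?Q \<le> M0 * ?Q" unfolding M0_def by (intro mult_right_mono) auto
      have Xx2: "?Xx \<le> M0 * ?Q"
      proof -
        have "?Xx \<le> Lg * ?n" using Lx[of "?q1 r \<sigma> y w" "?q2 r \<sigma> y w"] unfolding qd .
        then show ?thesis using nb M0Q by linarith
      qed
      have Xv2: "?Xv \<le> M0 * ?Q"
      proof -
        have "?Xv \<le> Lg * ?n" using Lv[of "?q1 r \<sigma> y w" "?q2 r \<sigma> y w"] unfolding qd .
        then show ?thesis using nb M0Q by linarith
      qed
      have kb: "\<bar>?k r \<sigma>\<bar> \<le> 2 ^ (CARD('n)+1) * r powr (- Q)"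
      proof -
        have "\<bar>?k r \<sigma>\<bar> = \<bar>(\<sigma>/r) ^ (CARD('n) + 1)\<bar> * r powr (- Q)"
          by (simp only: abs_mult abs_c0 mult_1_left abs_of_nonneg[OF powr_ge_zero])
        also have "\<dots> \<le> 2 ^ (CARD('n)+1) * r powr (- Q)"
          by (rule mult_right_mono[OF abs_t_pow[OF t]]) simp
        finally show ?thesis .
      qed
      have Me: "\<bar>Mmat \<beta> (\<sigma>/r) r $1$2\<bar> \<le> 2 * r powr (1-\<beta>)" "\<bar>Mmat \<beta> (\<sigma>/r) r $2$2\<bar> \<le> 2 * r powr (1-\<beta>)"
        using M_entries[OF r t beta] by auto
      have N: "norm (delta_y h (G0r \<psi> \<beta> r) p) \<le> \<bar>?k r \<sigma>\<bar> * (\<bar>Mmat \<beta> (\<sigma>/r) r $1$2\<bar> * ?Xx + \<bar>Mmat \<beta> (\<sigma>/r) r $2$2\<bar> * ?Xv)"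
      proof -
        have "norm (delta_y h (G0r \<psi> \<beta> r) p) = \<bar>?k r \<sigma>\<bar> * norm (Mmat \<beta> (\<sigma>/r) r $1$2 *\<^sub>R (grad_x \<psi> (?q1 r \<sigma> y w) - grad_x \<psi> (?q2 r \<sigma> y w))
             + Mmat \<beta> (\<sigma>/r) r $2$2 *\<^sub>R (grad_v \<psi> (?q1 r \<sigma> y w) - grad_v \<psi> (?q2 r \<sigma> y w)))"
          unfolding p D using s0 by simp
        also have "\<dots> \<le> \<bar>?k r \<sigma>\<bar> * (\<bar>Mmat \<beta> (\<sigma>/r) r $1$2\<bar> * ?Xx + \<bar>Mmat \<beta> (\<sigma>/r) r $2$2\<bar> * ?Xv)"
          by (rule mult_left_mono) (auto intro: order_trans[OF norm_triangle_ineq])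
        finally show ?thesis .
      qed
      have chain: "kk * (a * X1 + b * X2) \<le> K1 * (A1 * Y + A1 * Y)"
        if "0 \<le> kk" "kk \<le> K1" "0 \<le> a" "a \<le> A1" "0 \<le> b" "b \<le> A1" "0 \<le> X1" "X1 \<le> Y" "0 \<le> X2" "X2 \<le> Y"
        for kk K1 a A1 b X1 X2 Y :: real
      proof -
        have "a * X1 + b * X2 \<le> A1 * Y + A1 * Y" using that by (intro add_mono mult_mono) auto
        moreover have "0 \<le> a * X1 + b * X2" using that by simp
        ultimately show ?thesis using that by (intro mult_mono) auto
      qed
      have pw: "2 ^ (CARD('n)+1) * r powr (- Q) * (2 * r powr (1-\<beta>) * Y + 2 * r powr (1-\<beta>) * Y)
           = (2 ^ (CARD('n)+1) * 4) * r powr (-(Q + \<beta> - 1)) * Y" for Y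
      proof -
        have e: "-(Q - (1-\<beta>)) = -(Q + \<beta> - 1)" by simp
        have "r powr (- Q) * r powr (1-\<beta>) = r powr (-(Q + \<beta> - 1))" using powr_comb[OF r, of Q "1-\<beta>"] unfolding e .
        then show ?thesis by (simp add: algebra_simps)
      qed
      have "norm (delta_y h (G0r \<psi> \<beta> r) p) \<le> ((2 ^ (CARD('n)+1) * 4) * r powr (-(Q + \<beta> - 1)) * M0) * ?Q powr s"
      proof (rule min_powr)
        show "norm (delta_y h (G0r \<psi> \<beta> r) p) \<le> (2 ^ (CARD('n)+1) * 4) * r powr (-(Q + \<beta> - 1)) * M0"
        proof -
          note N
          also have "\<bar>?k r \<sigma>\<bar> * (\<bar>Mmat \<beta> (\<sigma>/r) r $1$2\<bar> * ?Xx + \<bar>Mmat \<beta> (\<sigma>/r) r $2$2\<bar> * ?Xv)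
              \<le> 2 ^ (CARD('n)+1) * r powr (- Q) * (2 * r powr (1-\<beta>) * M0 + 2 * r powr (1-\<beta>) * M0)"
            by (rule chain[OF _ kb _ Me(1) _ Me(2) _ Xx1 _ Xv1]) simp_all
          also have "\<dots> = (2 ^ (CARD('n)+1) * 4) * r powr (-(Q + \<beta> - 1)) * M0" by (rule pw)
          finally show ?thesis .
        qed
        show "norm (delta_y h (G0r \<psi> \<beta> r) p) \<le> (2 ^ (CARD('n)+1) * 4) * r powr (-(Q + \<beta> - 1)) * M0 * ?Q"
        proof -
          note N
          also have "\<bar>?k r \<sigma>\<bar> * (\<bar>Mmat \<beta> (\<sigma>/r) r $1$2\<bar> * ?Xx + \<bar>Mmat \<beta> (\<sigma>/r) r $2$2\<bar> * ?Xv)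
              \<le> 2 ^ (CARD('n)+1) * r powr (- Q) * (2 * r powr (1-\<beta>) * (M0 * ?Q) + 2 * r powr (1-\<beta>) * (M0 * ?Q))"
            by (rule chain[OF _ kb _ Me(1) _ Me(2) _ Xx2 _ Xv2]) simp_all
          also have "\<dots> = (2 ^ (CARD('n)+1) * 4) * r powr (-(Q + \<beta> - 1)) * (M0 * ?Q)" by (rule pw)
          finally show ?thesis by (simp only: mult.assoc)
        qed
      qed (use s in auto)
      then show ?thesis by (simp add: ac_simps)
    qed
  qed
  show ?thesis unfolding kgood_def M0_def[symmetric] Q_def[symmetric] using part1 part2 by (simp add: ac_simps)
qed

end

context psi_ctx begin

lemma Gv_kgood:
  assumes B: "\<And>p. \<bar>\<psi> p\<bar> \<le> B" and L: "\<And>p q. \<bar>\<psi> p - \<psi> q\<bar> \<le> L * norm (p - q)" and L0: "0 \<le> L"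
  shows "kgood \<beta> (\<lambda>r. delta_y h (Gvr \<psi> \<beta> r)) h (Qdim CARD('n) \<beta> + 2 - \<beta>)
           (2 ^ CARD('n) * (\<beta>+1)^2 * max (4*B) (4*(L+B)*(\<beta>+1)))"
proof -
  define M1 where "M1 = max (4*B) (4*(L+B)*(\<beta>+1))"
  define Q where "Q = Qdim CARD('n) \<beta>"
  have B0: "0 \<le> B" using B[of 0] by linarith
  have M10: "0 \<le> M1" unfolding M1_def using B0 by simp
  let ?z1 = "\<lambda>r \<sigma> y w. blk_app (Mmat \<beta> (\<sigma>/r) r) (y - h, w)"
  let ?z2 = "\<lambda>r \<sigma> y w. blk_app (Mmat \<beta> (\<sigma>/r) r) (y, w)"
  let ?q1 = "\<lambda>r \<sigma> y w. (\<sigma>/r, ?z1 r \<sigma> y w)"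
  let ?q2 = "\<lambda>r \<sigma> y w. (\<sigma>/r, ?z2 r \<sigma> y w)"
  let ?k = "\<lambda>r \<sigma>. - inverse (c0 CARD('n)) * (\<sigma>/r) ^ CARD('n) * r powr (- Q)"
  let ?F = "\<lambda>r \<sigma> z. F_app \<beta> (\<sigma>/r) r z"
  let ?Y = "\<lambda>r \<sigma> y w. \<psi> (?q1 r \<sigma> y w) *\<^sub>R ?F r \<sigma> (?z1 r \<sigma> y w) - \<psi> (?q2 r \<sigma> y w) *\<^sub>R ?F r \<sigma> (?z2 r \<sigma> y w)"
  have D: "delta_y h (Gvr \<psi> \<beta> r) (\<sigma>, y, w) = (if \<sigma> = 0 then 0 else ?k r \<sigma> *\<^sub>R ?Y r \<sigma> y w)"
    for r \<sigma> y w unfolding delta_y_def Gvr_def Q_def by (simp add: Let_def scaleR_diff_right)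
  have D0: "delta_y h (Gvr \<psi> \<beta> r) (\<sigma>, y, w) = 0" if "?q1 r \<sigma> y w \<notin> KK" "?q2 r \<sigma> y w \<notin> KK" for r \<sigma> y w
    unfolding D using psi_out[OF that(1)] psi_out[OF that(2)] by simp
  have part1: "0 < r \<and> -2*r < fst p \<and> fst p < -r \<and> p \<in> BoxS \<beta> (- fst p) h"
    if r: "0 \<le> r" and nz: "delta_y h (Gvr \<psi> \<beta> r) p \<noteq> 0" for r p
  proof -
    obtain \<sigma> y w where p: "p = (\<sigma>, y, w)" by (cases p) auto
    have "?q1 r \<sigma> y w \<in> KK \<or> ?q2 r \<sigma> y w \<in> KK"
    proof (rule ccontr)
      assume "\<not> (?q1 r \<sigma> y w \<in> KK \<or> ?q2 r \<sigma> y w \<in> KK)"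
      then have "?q1 r \<sigma> y w \<notin> KK" "?q2 r \<sigma> y w \<notin> KK" by simp_all
      then have "delta_y h (Gvr \<psi> \<beta> r) (\<sigma>, y, w) = 0" by (rule D0)
      then show False using nz p by simp
    qed
    from supp_common[OF r this] show ?thesis using p by simp
  qed
  have part2: "norm (delta_y h (Gvr \<psi> \<beta> r) p) \<le> (2 ^ CARD('n) * (\<beta>+1)^2 * M1) * r powr (-(Q + 2 - \<beta>)) * (norm h * r powr (-\<beta>)) powr s"
    if r: "0 < r" and s: "0 < s" "s \<le> 1" for r p s
  proof -
    obtain \<sigma> y w where p: "p = (\<sigma>, y, w)" by (cases p) auto
    have rhs0: "0 \<le> (2 ^ CARD('n) * (\<beta>+1)^2 * M1) * r powr (-(Q + 2 - \<beta>)) * (norm h * r powr (-\<beta>)) powr s"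
      using M10 by simp
    show ?thesis
    proof (cases "\<sigma> = 0 \<or> (?q1 r \<sigma> y w \<notin> KK \<and> ?q2 r \<sigma> y w \<notin> KK)")
      case c: True
      have "delta_y h (Gvr \<psi> \<beta> r) p = 0"
      proof (cases "\<sigma> = 0")
        case True then show ?thesis unfolding p D by simp
      next
        case False
        then have "?q1 r \<sigma> y w \<notin> KK" "?q2 r \<sigma> y w \<notin> KK" using c by simp_all
        then show ?thesis unfolding p by (rule D0)
      qed
      then show ?thesis using rhs0 by simp
    next
      case False
      then have s0: "\<sigma> \<noteq> 0" and K: "?q1 r \<sigma> y w \<in> KK \<or> ?q2 r \<sigma> y w \<in> KK" by auto
      obtain q where q: "q \<in> KK" "fst q = \<sigma>/r" using K by (metis fst_conv)
      have t: "-2 < \<sigma>/r" "\<sigma>/r < -1" using KK_box[OF q(1)] q(2) by simp_all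
      define Fb where "Fb = (\<beta>+1)^2 * r powr (\<beta>-2)"
      have Fb0: "0 \<le> Fb" unfolding Fb_def by simp
      define z1 where "z1 = ?z1 r \<sigma> y w"
      define z2 where "z2 = ?z2 r \<sigma> y w"
      define F1 where "F1 = ?F r \<sigma> z1"
      define F2 where "F2 = ?F r \<sigma> z2"
      define p1 where "p1 = \<psi> (\<sigma>/r, z1)"
      define p2 where "p2 = \<psi> (\<sigma>/r, z2)"
      define n where "n = norm (z1 - z2)"
      let ?Q = "norm h * r powr (-\<beta>)"
      have Yeq: "?Y r \<sigma> y w = p1 *\<^sub>R F1 - p2 *\<^sub>R F2" unfolding p1_def p2_def F1_def F2_def z1_def z2_def by simp
      have nb: "n \<le> 2*(\<beta>+1) * ?Q" unfolding n_def z1_def z2_def using blk_diff_norm[OF r t beta, of y h w] by (simp add: ac_simps)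
      have Fin: "norm (?F r \<sigma> z) \<le> 2 * Fb" if "(\<sigma>/r, z) \<in> KK" for z
      proof -
        have "norm (fst z) \<le> 1" "norm (snd z) \<le> 1" using KK_box[OF that] by simp_all
        then have "norm (fst z) + norm (snd z) \<le> 2" by simp
        then have "Fb * (norm (fst z) + norm (snd z)) \<le> Fb * 2" by (rule mult_left_mono) (rule Fb0)
        then show ?thesis using F_bound[OF r t beta, of z] unfolding Fb_def by simp
      qed
      have trm: "\<bar>\<psi> (\<sigma>/r, z)\<bar> * norm (?F r \<sigma> z) \<le> B * (2 * Fb)" for z
      proof (cases "(\<sigma>/r, z) \<in> KK")
        case True then show ?thesis using B[of "(\<sigma>/r, z)"] Fin[OF True] by (intro mult_mono) auto
      next
        case False then show ?thesis using psi_out[OF False] B0 Fb0 by simp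
      qed
      have FD: "norm (F1 - F2) \<le> Fb * (2 * n)"
      proof -
        have "norm (F1 - F2) = norm (?F r \<sigma> (z1 - z2))" unfolding F1_def F2_def by (simp only: F_lin)
        also have "\<dots> \<le> Fb * (norm (fst (z1 - z2)) + norm (snd (z1 - z2)))"
          using F_bound[OF r t beta, of "z1 - z2"] unfolding Fb_def .
        also have "\<dots> \<le> Fb * (2 * n)"
        proof (rule mult_left_mono[OF _ Fb0])
          have "norm (fst (z1 - z2)) \<le> n" "norm (snd (z1 - z2)) \<le> n" unfolding n_def
            by (metis norm_fst_le prod.collapse, metis norm_snd_le prod.collapse)
          then show "norm (fst (z1 - z2)) + norm (snd (z1 - z2)) \<le> 2 * n" by simp
        qed
        finally show ?thesis .
      qed
      have pd: "\<bar>p1 - p2\<bar> \<le> L * n"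
        unfolding p1_def p2_def n_def using L[of "(\<sigma>/r, z1)" "(\<sigma>/r, z2)"] by (simp only: norm_pair_same)
      have n0: "0 \<le> n" unfolding n_def by simp
      have Y1: "norm (p1 *\<^sub>R F1 - p2 *\<^sub>R F2) \<le> M1 * Fb"
      proof -
        have "norm (p1 *\<^sub>R F1 - p2 *\<^sub>R F2) \<le> \<bar>p1\<bar> * norm F1 + \<bar>p2\<bar> * norm F2"
          using norm_triangle_ineq4[of "p1 *\<^sub>R F1" "p2 *\<^sub>R F2"] by simp
        also have "\<dots> \<le> B * (2 * Fb) + B * (2 * Fb)"
          unfolding p1_def p2_def F1_def F2_def by (intro add_mono trm)
        also have "\<dots> = (4*B) * Fb" by simp
        also have "\<dots> \<le> M1 * Fb" unfolding M1_def using Fb0 by (intro mult_right_mono) auto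
        finally show ?thesis .
      qed
      have Y2: "norm (p1 *\<^sub>R F1 - p2 *\<^sub>R F2) \<le> M1 * Fb * ?Q"
      proof -
        have "norm (p1 *\<^sub>R F1 - p2 *\<^sub>R F2) \<le> (2*(L+B)*Fb) * n"
        proof (cases "(\<sigma>/r, z1) \<in> KK")
          case True
          have e: "p1 *\<^sub>R F1 - p2 *\<^sub>R F2 = (p1 - p2) *\<^sub>R F1 + p2 *\<^sub>R (F1 - F2)" by (simp add: algebra_simps)
          have "norm (p1 *\<^sub>R F1 - p2 *\<^sub>R F2) \<le> \<bar>p1 - p2\<bar> * norm F1 + \<bar>p2\<bar> * norm (F1 - F2)"
            unfolding e using norm_triangle_ineq[of "(p1 - p2) *\<^sub>R F1" "p2 *\<^sub>R (F1 - F2)"] by simp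
          also have "\<dots> \<le> (L * n) * (2 * Fb) + B * (Fb * (2 * n))"
          proof (intro add_mono mult_mono)
            show "norm F1 \<le> 2 * Fb" unfolding F1_def by (rule Fin[OF True])
            show "\<bar>p2\<bar> \<le> B" unfolding p2_def by (rule B)
          qed (use pd FD L0 n0 B0 in auto)
          also have "\<dots> = (2*(L+B)*Fb) * n" by (simp add: algebra_simps)
          finally show ?thesis .
        next
          case False
          have p10: "p1 = 0" unfolding p1_def by (rule psi_out[OF False])
          have "norm (p1 *\<^sub>R F1 - p2 *\<^sub>R F2) = \<bar>p1 - p2\<bar> * norm F2" using p10 by simp
          also have "\<dots> \<le> (2*(L+B)*Fb) * n"
          proof (cases "(\<sigma>/r, z2) \<in> KK")
            case True
            have "\<bar>p1 - p2\<bar> * norm F2 \<le> (L * n) * (2 * Fb)"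
              using pd Fin[OF True] L0 n0 unfolding F2_def by (intro mult_mono) auto
            also have "\<dots> \<le> (2*(L+B)*Fb) * n" using B0 Fb0 n0 L0
              by (simp add: algebra_simps mult_right_mono mult_left_mono)
            finally show ?thesis .
          next
            case False
            have "p2 = 0" unfolding p2_def by (rule psi_out[OF False])
            then show ?thesis using p10 B0 Fb0 n0 L0 by simp
          qed
          finally show ?thesis .
        qed
        also have "\<dots> \<le> (2*(L+B)*Fb) * (2*(\<beta>+1) * ?Q)"
          by (rule mult_left_mono[OF nb]) (use L0 B0 Fb0 in simp)
        also have "\<dots> = (4*(L+B)*(\<beta>+1)) * Fb * ?Q" by (simp add: algebra_simps)
        also have "\<dots> \<le> M1 * Fb * ?Q" unfolding M1_def using Fb0 
          by (intro mult_right_mono) auto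
        finally show ?thesis .
      qed
      have kb: "\<bar>?k r \<sigma>\<bar> \<le> 2 ^ CARD('n) * r powr (- Q)"
      proof -
        have "\<bar>?k r \<sigma>\<bar> = \<bar>(\<sigma>/r) ^ CARD('n)\<bar> * r powr (- Q)"
          by (simp only: abs_mult abs_minus_cancel abs_c0 mult_1_left abs_of_nonneg[OF powr_ge_zero])
        also have "\<dots> \<le> 2 ^ CARD('n) * r powr (- Q)"
          by (rule mult_right_mono[OF abs_t_pow[OF t]]) simp
        finally show ?thesis .
      qed
      have N: "norm (delta_y h (Gvr \<psi> \<beta> r) p) = \<bar>?k r \<sigma>\<bar> * norm (p1 *\<^sub>R F1 - p2 *\<^sub>R F2)"
        unfolding p D Yeq[symmetric] using s0 by simp
      have pw: "2 ^ CARD('n) * r powr (- Q) * (M1 * Fb) = (2 ^ CARD('n) * (\<beta>+1)^2) * r powr (-(Q + 2 - \<beta>)) * M1"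
      proof -
        have e: "-(Q - (\<beta>-2)) = -(Q + 2 - \<beta>)" by simp
        have "r powr (- Q) * r powr (\<beta>-2) = r powr (-(Q + 2 - \<beta>))" using powr_comb[OF r, of Q "\<beta>-2"] unfolding e .
        then show ?thesis unfolding Fb_def by (simp add: algebra_simps)
      qed
      have "norm (delta_y h (Gvr \<psi> \<beta> r) p) \<le> ((2 ^ CARD('n) * (\<beta>+1)^2) * r powr (-(Q + 2 - \<beta>)) * M1) * ?Q powr s"
      proof (rule min_powr)
        show "norm (delta_y h (Gvr \<psi> \<beta> r) p) \<le> (2 ^ CARD('n) * (\<beta>+1)^2) * r powr (-(Q + 2 - \<beta>)) * M1"
        proof -
          have "norm (delta_y h (Gvr \<psi> \<beta> r) p) \<le> 2 ^ CARD('n) * r powr (- Q) * (M1 * Fb)"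
            unfolding N by (rule mult_mono[OF kb Y1]) simp_all
          then show ?thesis unfolding pw .
        qed
        show "norm (delta_y h (Gvr \<psi> \<beta> r) p) \<le> (2 ^ CARD('n) * (\<beta>+1)^2) * r powr (-(Q + 2 - \<beta>)) * M1 * ?Q"
        proof -
          have "norm (delta_y h (Gvr \<psi> \<beta> r) p) \<le> 2 ^ CARD('n) * r powr (- Q) * (M1 * Fb * ?Q)"
            unfolding N by (rule mult_mono[OF kb Y2]) simp_all
          also have "\<dots> = 2 ^ CARD('n) * r powr (- Q) * (M1 * Fb) * ?Q" by (simp only: mult.assoc)
          finally show ?thesis unfolding pw .
        qed
      qed (use s in auto)
      then show ?thesis by (simp add: ac_simps)
    qed
  qed
  show ?thesis unfolding kgood_def M1_def[symmetric] Q_def[symmetric] using part1 part2 by (simp add: ac_simps)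
qed

end

lemma emeasure_Times_lborel:
  fixes A :: "'a::euclidean_space set" and B :: "'b::euclidean_space set"
  assumes "A \<in> sets lborel" "B \<in> sets lborel"
  shows "emeasure lborel (A \<times> B) = emeasure lborel A * emeasure lborel B"
proof -
  have "emeasure (lborel :: ('a \<times> 'b) measure) (A \<times> B) = emeasure (lborel \<Otimes>\<^sub>M lborel) (A \<times> B)"
    by (simp only: lborel_prod)
  also have "\<dots> = emeasure lborel A * emeasure lborel B"
    using assms by (intro lborel.emeasure_pair_measure_Times) auto
  finally show ?thesis .
qed

lemma BoxS_closed: "closed (BoxS \<beta> \<rho> h)"
  unfolding BoxS_def by (intro closed_Times closed_Un closed_cball closed_atLeastAtMost)

lemma BoxS_sets: "BoxS \<beta> \<rho> h \<in> sets lborel"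
  using borel_closed[OF BoxS_closed] by simp

lemma BoxS_mono:
  assumes "1 < \<beta>" "0 < \<rho>" "\<rho> \<le> \<rho>'"
  shows "BoxS \<beta> \<rho> h \<subseteq> BoxS \<beta> \<rho>' h"
proof -
  have a: "2 * \<rho> powr \<beta> \<le> 2 * \<rho>' powr \<beta>" using assms by (simp add: powr_mono2)
  have b: "2*(\<beta>+1) * \<rho> powr (\<beta>-1) \<le> 2*(\<beta>+1) * \<rho>' powr (\<beta>-1)" using assms by (simp add: powr_mono2)
  have "cball 0 (2 * \<rho> powr \<beta>) \<union> cball h (2 * \<rho> powr \<beta>) \<subseteq> cball 0 (2 * \<rho>' powr \<beta>) \<union> cball h (2 * \<rho>' powr \<beta>)"
    using subset_cball[OF a, of 0] subset_cball[OF a, of h] by blast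
  moreover have "cball 0 (2*(\<beta>+1) * \<rho> powr (\<beta>-1)) \<subseteq> cball (0::real^'a) (2*(\<beta>+1) * \<rho>' powr (\<beta>-1))"
    by (rule subset_cball[OF b])
  moreover have "{-\<rho>..0} \<subseteq> {-\<rho>'..0::real}" using assms by simp
  ultimately show ?thesis unfolding BoxS_def by (intro Sigma_mono) auto
qed

definition Vbox :: "real \<Rightarrow> nat \<Rightarrow> real" where
  "Vbox \<beta> d = 2 * unit_ball_vol (real d) ^ 2 * 2 ^ d * (2*(\<beta>+1)) ^ d"

lemma Vbox_nonneg: "1 < \<beta> \<Longrightarrow> 0 \<le> Vbox \<beta> d"
  unfolding Vbox_def by (simp add: unit_ball_vol_nonneg)

lemma BoxS_meas:
  fixes h :: "real^'n"
  assumes b: "1 < \<beta>" and r: "0 < \<rho>"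
  shows "emeasure lborel (BoxS \<beta> \<rho> h) \<le> ennreal (Vbox \<beta> CARD('n) * \<rho> powr Qdim CARD('n) \<beta>)"
proof -
  let ?d = "CARD('n)"
  let ?u = "unit_ball_vol (real ?d)"
  let ?a = "2 * \<rho> powr \<beta>" and ?c = "2*(\<beta>+1) * \<rho> powr (\<beta>-1)"
  have u0: "0 \<le> ?u" by (simp add: unit_ball_vol_nonneg)
  have a0: "0 \<le> ?a" and c0': "0 \<le> ?c" using b by simp_all
  have cb: "emeasure lborel (cball (x::real^'n) R) = ennreal (?u * R ^ ?d)" if "0 \<le> R" for x R
    using emeasure_cball[OF that, of x] by simp
  have e1: "emeasure lborel (BoxS \<beta> \<rho> h) = emeasure lborel {-\<rho>..0::real} *
      (emeasure lborel (cball 0 ?a \<union> cball h ?a) * emeasure lborel (cball (0::real^'n) ?c))"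
  proof -
    have s1: "{-\<rho>..0::real} \<in> sets lborel" using borel_closed[OF closed_atLeastAtMost[of "-\<rho>" "0::real"]] by simp
    have s2: "cball 0 ?a \<union> cball h ?a \<in> sets lborel"
      using borel_closed[OF closed_Un[OF closed_cball[of 0 ?a] closed_cball[of h ?a]]] by simp
    have s3: "cball (0::real^'n) ?c \<in> sets lborel" using borel_closed[OF closed_cball[of 0 ?c]] by simp
    have s23: "(cball 0 ?a \<union> cball h ?a) \<times> cball (0::real^'n) ?c \<in> sets lborel"
      using borel_closed[OF closed_Times[OF closed_Un[OF closed_cball[of 0 ?a] closed_cball[of h ?a]] closed_cball[of 0 ?c]]] by simp
    show ?thesis unfolding BoxS_def emeasure_Times_lborel[OF s1 s23] emeasure_Times_lborel[OF s2 s3] ..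
  qed
  have e2: "emeasure lborel (cball 0 ?a \<union> cball h ?a) \<le> ennreal (2 * (?u * ?a ^ ?d))"
  proof -
    have "emeasure lborel (cball 0 ?a \<union> cball h ?a) \<le> emeasure lborel (cball (0::real^'n) ?a) + emeasure lborel (cball h ?a)"
      by (rule emeasure_subadditive) auto
    also have "\<dots> = ennreal (2 * (?u * ?a ^ ?d))" unfolding cb[OF a0] using u0 a0
      by (simp add: ennreal_plus[symmetric] del: ennreal_plus)
    finally show ?thesis .
  qed
  have "emeasure lborel (BoxS \<beta> \<rho> h) \<le> ennreal \<rho> * (ennreal (2 * (?u * ?a ^ ?d)) * ennreal (?u * ?c ^ ?d))"
    unfolding e1 cb[OF c0'] using r e2 by (intro mult_mono) auto
  also have "\<dots> = ennreal (\<rho> * (2 * (?u * ?a ^ ?d) * (?u * ?c ^ ?d)))"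
    using r u0 a0 c0' by (simp add: ennreal_mult)
  also have "\<rho> * (2 * (?u * ?a ^ ?d) * (?u * ?c ^ ?d)) = Vbox \<beta> ?d * \<rho> powr Qdim ?d \<beta>"
  proof -
    have p1: "(\<rho> powr \<beta>) ^ ?d = \<rho> powr (\<beta> * ?d)" using r by (simp add: powr_realpow[symmetric] powr_powr)
    have p2: "(\<rho> powr (\<beta>-1)) ^ ?d = \<rho> powr ((\<beta>-1) * ?d)" using r by (simp add: powr_realpow[symmetric] powr_powr)
    have p3: "\<rho> * \<rho> powr (\<beta> * ?d) * \<rho> powr ((\<beta>-1) * ?d) = \<rho> powr Qdim ?d \<beta>"
    proof -
      have "\<rho> * \<rho> powr (\<beta> * ?d) * \<rho> powr ((\<beta>-1) * ?d) = \<rho> powr 1 * \<rho> powr (\<beta> * ?d) * \<rho> powr ((\<beta>-1) * ?d)"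
        using r by simp
      also have "\<dots> = \<rho> powr (1 + \<beta> * ?d + (\<beta>-1) * ?d)" by (simp only: powr_add[symmetric])
      also have "\<dots> = \<rho> powr Qdim ?d \<beta>"
        by (rule arg_cong[where f="\<lambda>e. \<rho> powr e"]) (simp add: Qdim_def algebra_simps)
      finally show ?thesis .
    qed
    show ?thesis unfolding Vbox_def power_mult_distrib p1 p2 p3[symmetric] by (simp add: algebra_simps power2_eq_square)
  qed
  finally show ?thesis .
qed


lemma ennpowr_mono: assumes "x \<le> y" "0 \<le> p" shows "ennpowr x p \<le> ennpowr y p"
proof (cases "y = \<infinity>")
  case True then show ?thesis by (simp add: ennpowr_def)
next
  case False
  then have "x \<noteq> \<infinity>" using assms(1) by (metis infinity_ennreal_def top.extremum_uniqueI)
  moreover have "enn2real x \<le> enn2real y" using assms(1) False by (intro enn2real_mono) (auto simp: top.not_eq_extremum)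
  ultimately show ?thesis using False assms(2) by (simp add: ennpowr_def powr_mono2)
qed

lemma ennpowr_ennreal: "0 \<le> X \<Longrightarrow> ennpowr (ennreal X) p = ennreal (X powr p)"
  by (simp add: ennpowr_def)

lemma int_bound:
  fixes f :: "real \<Rightarrow> 'b::euclidean_space"
  assumes fb: "\<And>r. r \<in> {0..\<tau>} \<Longrightarrow> norm (f r) \<le> (if r \<in> {l..u} then K else 0)"
    and K: "0 \<le> K" and lu: "l \<le> u"
  shows "norm (integral {0..\<tau>} f) \<le> K * (u - l)"
proof (cases "f integrable_on {0..\<tau>}")
  case False then show ?thesis using K lu by (simp add: not_integrable_integral)
next
  case True
  let ?g = "\<lambda>r. if r \<in> {l..u} then K else 0"
  have eq: "{l..u} \<inter> {0..\<tau>} = {max l 0..min u \<tau>}" by auto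
  have gi: "?g integrable_on {0..\<tau>}"
    using has_integral_restrict_Int[of "{l..u}" "\<lambda>_. K" _ "{0..\<tau>}"] eq
    by (metis has_integral_const_real integrable_on_def)
  have "norm (integral {0..\<tau>} f) \<le> integral {0..\<tau>} ?g"
    by (rule integral_norm_bound_integral[OF True gi fb])
  also have "integral {0..\<tau>} ?g = integral ({l..u} \<inter> {0..\<tau>}) (\<lambda>_. K)"
    by (rule integral_restrict_Int)
  also have "\<dots> = measure lborel {max l 0..min u \<tau>} * K" unfolding eq by simp
  also have "\<dots> \<le> (u - l) * K"
  proof (rule mult_right_mono[OF _ K])
    show "measure lborel {max l 0..min u \<tau>} \<le> u - l" using lu by (simp add: content_real_if min_def max_def)
  qed
  finally show ?thesis by (simp add: mult.commute)
qed


lemma powr_le_max1: assumes "0 \<le> (z::real)" "0 < e" "e \<le> 1" shows "z powr e \<le> max 1 z"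
proof (cases "z \<le> 1")
  case True then have "z powr e \<le> 1" using assms by (intro powr_le1) auto
  then show ?thesis by simp
next
  case False
  then have "z powr e \<le> z powr 1" using assms by (intro powr_mono) auto
  then show ?thesis using False by simp
qed

lemma Qdim_pos: "1 < \<beta> \<Longrightarrow> 0 < Qdim d \<beta>"
proof -
  assume "1 < \<beta>"
  then have "0 \<le> (2*\<beta>-1) * real d" by simp
  then show ?thesis unfolding Qdim_def by linarith
qed

lemma A_eq:
  assumes r: "0 < (r::real)" and s: "0 < s"
  shows "C * r powr (-a) * (norm h * r powr (-\<beta>)) powr s = C * norm h powr s * r powr (-a - \<beta> * s)"
proof -
  have "(norm h * r powr (-\<beta>)) powr s = norm h powr s * r powr (-\<beta> * s)"
    using r by (simp add: powr_mult powr_powr)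
  moreover have "r powr (-a) * r powr (-\<beta> * s) = r powr (-a - \<beta> * s)"
    by (simp add: powr_add[symmetric])
  ultimately show ?thesis by (simp add: ac_simps)
qed

lemma kgood_pointwise:
  fixes D :: "real \<Rightarrow> ('n::finite) pt \<Rightarrow> 'b::real_normed_vector" and h :: "real^'n"
  assumes kg: "kgood \<beta> D h a C" and b: "1 < \<beta>" and C: "0 \<le> C"
    and r: "0 < r" and s: "0 < s" "s \<le> 1"
  shows "norm (D r x) \<le> (C * norm h powr s * r powr (-a - \<beta> * s)) * indicator (BoxS \<beta> (2*r) h) x"
proof (cases "D r x = 0")
  case True then show ?thesis using C by simp
next
  case False
  have k1: "\<And>r p. 0 \<le> r \<Longrightarrow> D r p \<noteq> 0 \<Longrightarrow> 0 < r \<and> -2*r < fst p \<and> fst p < -r \<and> p \<in> BoxS \<beta> (- fst p) h"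
    using conjunct1[OF kg[unfolded kgood_def]] by blast
  have p1: "0 < r \<and> -2*r < fst x \<and> fst x < -r \<and> x \<in> BoxS \<beta> (- fst x) h"
    using k1[of r x] False r by simp
  have "BoxS \<beta> (- fst x) h \<subseteq> BoxS \<beta> (2*r) h" using p1 b by (intro BoxS_mono) auto
  then have xin: "x \<in> BoxS \<beta> (2*r) h" using p1 by blast
  have k2: "\<And>r p s. 0 < r \<Longrightarrow> 0 < s \<Longrightarrow> s \<le> 1 \<Longrightarrow> norm (D r p) \<le> C * r powr (-a) * (norm h * r powr (-\<beta>)) powr s"
    using conjunct2[OF kg[unfolded kgood_def]] by blast
  have "norm (D r x) \<le> C * r powr (-a) * (norm h * r powr (-\<beta>)) powr s"
    using k2[OF r s] .
  then have "norm (D r x) \<le> C * norm h powr s * r powr (-a - \<beta> * s)" unfolding A_eq[OF r s(1)] .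
  then show ?thesis using xin by simp
qed

lemma Lnorm_bound:
  fixes D :: "real \<Rightarrow> ('n::finite) pt \<Rightarrow> 'b::real_normed_vector" and h :: "real^'n"
  assumes kg: "kgood \<beta> D h (Qdim CARD('n) \<beta>) C" and b: "1 < \<beta>" and C: "0 \<le> C"
    and r: "0 < r" and s: "0 < s" "s \<le> 1" and th: "1 \<le> \<theta>"
    and meas: "\<theta> = \<infinity> \<Longrightarrow> D r \<in> borel_measurable lborel"
  shows "Lnorm \<theta> (D r) \<le> ennreal (C * max 1 (Vbox \<beta> CARD('n) * 2 powr Qdim CARD('n) \<beta>) * norm h powr s
            * r powr (Qdim CARD('n) \<beta> * (recip \<theta> - 1) - \<beta> * s))"
proof -
  define Q where "Q = Qdim CARD('n) \<beta>"
  define V where "V = Vbox \<beta> CARD('n)"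
  define S where "S = BoxS \<beta> (2*r) h"
  define A where "A = C * norm h powr s * r powr (-Q - \<beta> * s)"
  define mx where "mx = max 1 (V * 2 powr Q)"
  have Q0: "0 < Q" unfolding Q_def using Qdim_pos[OF b] .
  have V0: "0 \<le> V" unfolding V_def using Vbox_nonneg[OF b] .
  have A0: "0 \<le> A" unfolding A_def using C by simp
  have mx1: "1 \<le> mx" unfolding mx_def by simp
  have pw: "norm (D r x) \<le> A * indicator S x" for x
    unfolding A_def S_def Q_def using kgood_pointwise[OF kg b C r s] .
  have Sset: "S \<in> sets lborel" unfolding S_def by (rule BoxS_sets)
  have Sm: "emeasure lborel S \<le> ennreal (V * (2 powr Q * r powr Q))"
  proof -
    have "emeasure lborel S \<le> ennreal (V * (2*r) powr Q)"
      unfolding S_def V_def Q_def using BoxS_meas[OF b, of "2*r" h] r by simp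
    also have "(2*r) powr Q = 2 powr Q * r powr Q" using r by (simp add: powr_mult)
    finally show ?thesis .
  qed
  show ?thesis
  proof (cases \<theta>)
    case PInf
    have mf: "(\<lambda>x. ereal (norm (D r x))) \<in> borel_measurable lborel"
      using meas[OF PInf] by measurable
    have "esssup lborel (\<lambda>x. ereal (norm (D r x))) \<le> ereal A"
    proof (rule esssup_I[OF mf])
      show "AE x in lborel. ereal (norm (D r x)) \<le> ereal A"
      proof (rule AE_I2)
        fix x show "ereal (norm (D r x)) \<le> ereal A"
          using pw[of x] A0 by (cases "x \<in> S") auto
      qed
    qed
    then have "Lnorm \<theta> (D r) \<le> ennreal A" unfolding Lnorm_def PInf using e2ennreal_mono by fastforce
    also have "ennreal A \<le> ennreal (C * mx * norm h powr s * r powr (Q * (recip \<theta> - 1) - \<beta> * s))"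
    proof (rule ennreal_leI)
      have "A = 1 * (C * norm h powr s * r powr (Q * (recip \<theta> - 1) - \<beta> * s))"
        unfolding A_def PInf recip_def by simp
      also have "\<dots> \<le> mx * (C * norm h powr s * r powr (Q * (recip \<theta> - 1) - \<beta> * s))"
        using mx1 C by (intro mult_right_mono) auto
      finally show "A \<le> C * mx * norm h powr s * r powr (Q * (recip \<theta> - 1) - \<beta> * s)" by (simp add: ac_simps)
    qed
    finally show ?thesis unfolding Q_def mx_def V_def .
  next
    case MInf then show ?thesis using th by simp
  next
    case (real t)
    have t1: "1 \<le> t" using th real by simp
    have rt: "real_of_ereal \<theta> = t" "recip \<theta> = 1 / t" using real by (simp_all add: recip_def)
    have "(\<integral>\<^sup>+ x. ennreal (norm (D r x) powr t) \<partial>lborel) \<le> (\<integral>\<^sup>+ x. ennreal (A powr t) * indicator S x \<partial>lborel)"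
    proof (rule nn_integral_mono)
      fix x
      show "ennreal (norm (D r x) powr t) \<le> ennreal (A powr t) * indicator S x"
      proof (cases "x \<in> S")
        case True
        then have "norm (D r x) \<le> A" using pw[of x] by simp
        then have "norm (D r x) powr t \<le> A powr t" using t1 by (intro powr_mono2) auto
        then show ?thesis using True by simp
      next
        case False
        then have "norm (D r x) = 0" using pw[of x] by simp
        then show ?thesis by simp
      qed
    qed
    also have "\<dots> = ennreal (A powr t) * emeasure lborel S" by (rule nn_integral_cmult_indicator[OF Sset])
    also have "\<dots> \<le> ennreal (A powr t) * ennreal (V * (2 powr Q * r powr Q))" by (rule mult_left_mono[OF Sm]) simp
    also have "\<dots> = ennreal (A powr t * (V * (2 powr Q * r powr Q)))" using V0 by (simp add: ennreal_mult)
    finally have I: "(\<integral>\<^sup>+ x. ennreal (norm (D r x) powr t) \<partial>lborel) \<le> ennreal (A powr t * (V * (2 powr Q * r powr Q)))" .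
    have "Lnorm \<theta> (D r) \<le> ennpowr (ennreal (A powr t * (V * (2 powr Q * r powr Q)))) (1 / t)"
      unfolding Lnorm_def using real rt(1) I t1 by (simp add: ennpowr_mono)
    also have "\<dots> = ennreal ((A powr t * (V * (2 powr Q * r powr Q))) powr (1 / t))"
      using A0 V0 by (intro ennpowr_ennreal) simp
    also have "(A powr t * (V * (2 powr Q * r powr Q))) powr (1 / t) = A * (V * 2 powr Q) powr (1/t) * r powr (Q / t)"
    proof -
      have "(A powr t * (V * (2 powr Q * r powr Q))) powr (1 / t) = (A powr t) powr (1/t) * (V * 2 powr Q) powr (1/t) * (r powr Q) powr (1/t)"
        using A0 V0 r by (simp add: powr_mult mult.assoc)
      also have "(A powr t) powr (1/t) = A" using A0 t1 by (simp add: powr_powr)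
      also have "(r powr Q) powr (1/t) = r powr (Q / t)" by (simp add: powr_powr)
      finally show ?thesis .
    qed
    also have "ennreal (A * (V * 2 powr Q) powr (1/t) * r powr (Q / t)) \<le> ennreal (A * mx * r powr (Q / t))"
    proof (rule ennreal_leI)
      have "(V * 2 powr Q) powr (1/t) \<le> mx" unfolding mx_def using V0 t1 by (intro powr_le_max1) auto
      then show "A * (V * 2 powr Q) powr (1/t) * r powr (Q / t) \<le> A * mx * r powr (Q / t)"
        using A0 by (intro mult_right_mono mult_left_mono) auto
    qed
    also have "A * mx * r powr (Q / t) = C * mx * norm h powr s * r powr (Q * (recip \<theta> - 1) - \<beta> * s)"
    proof -
      have "r powr (-Q - \<beta> * s) * r powr (Q / t) = r powr (Q * (recip \<theta> - 1) - \<beta> * s)"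
        unfolding rt(2) by (simp add: powr_add[symmetric] algebra_simps)
      then show ?thesis unfolding A_def by (simp add: ac_simps)
    qed
    finally show ?thesis unfolding Q_def mx_def V_def .
  qed
qed


lemma integral_ne0_witness:
  fixes f :: "real \<Rightarrow> 'b::euclidean_space"
  assumes "integral {0..\<tau>} f \<noteq> 0"
  shows "\<exists>r\<in>{0..\<tau>}. f r \<noteq> 0"
proof (rule ccontr)
  assume "\<not> (\<exists>r\<in>{0..\<tau>}. f r \<noteq> 0)"
  then have "integral {0..\<tau>} f = integral {0..\<tau>} (\<lambda>_. 0)" by (intro integral_cong) auto
  then show False using assms by simp
qed

lemma stepA:
  fixes J :: "real \<Rightarrow> ('n::finite) pt \<Rightarrow> 'b::euclidean_space" and h :: "real^'n"
  assumes kg: "kgood \<beta> (\<lambda>r. delta_y h (J r)) h a C" and b: "1 < \<beta>" and C: "0 \<le> C"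
    and s: "0 < s" "s \<le> 1" and bpos: "0 < a - 1 + \<beta> * s"
    and nz: "integral {0..\<tau>} (\<lambda>r. delta_y h (J r) p) \<noteq> 0"
  shows "fst p < 0 \<and> p \<in> BoxS \<beta> (- fst p) h \<and>
    norm (integral {0..\<tau>} (\<lambda>r. delta_y h (J r) p)) \<le> (C * norm h powr s) * (- fst p / 2) powr (-(a - 1 + \<beta> * s))"
proof -
  define D where "D = (\<lambda>r. delta_y h (J r))"
  define W where "W = C * norm h powr s"
  define bb where "bb = a - 1 + \<beta> * s"
  have W0: "0 \<le> W" unfolding W_def using C by simp
  have k1: "\<And>r p. 0 \<le> r \<Longrightarrow> D r p \<noteq> 0 \<Longrightarrow> 0 < r \<and> -2*r < fst p \<and> fst p < -r \<and> p \<in> BoxS \<beta> (- fst p) h"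
    using conjunct1[OF kg[unfolded kgood_def]] unfolding D_def by blast
  have k2: "\<And>r p s. 0 < r \<Longrightarrow> 0 < s \<Longrightarrow> s \<le> 1 \<Longrightarrow> norm (D r p) \<le> C * r powr (-a) * (norm h * r powr (-\<beta>)) powr s"
    using conjunct2[OF kg[unfolded kgood_def]] unfolding D_def by blast
  obtain r0 where r0: "r0 \<in> {0..\<tau>}" "D r0 p \<noteq> 0" using integral_ne0_witness[OF nz] unfolding D_def by blast
  have p1: "0 < r0 \<and> -2*r0 < fst p \<and> fst p < -r0 \<and> p \<in> BoxS \<beta> (- fst p) h" using k1[of r0 p] r0 by simp
  define \<zeta> where "\<zeta> = - fst p"
  have z0: "0 < \<zeta>" unfolding \<zeta>_def using p1 by simp
  define K where "K = W * (\<zeta>/2) powr (-(bb + 1))"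
  have K0: "0 \<le> K" unfolding K_def using W0 by simp
  have fb: "norm (D r p) \<le> (if r \<in> {\<zeta>/2..\<zeta>} then K else 0)" if "r \<in> {0..\<tau>}" for r
  proof (cases "D r p = 0")
    case True then show ?thesis using K0 by simp
  next
    case False
    have q: "0 < r \<and> -2*r < fst p \<and> fst p < -r" using k1[of r p] False that by simp
    then have rin: "r \<in> {\<zeta>/2..\<zeta>}" unfolding \<zeta>_def by simp
    have "norm (D r p) \<le> C * r powr (-a) * (norm h * r powr (-\<beta>)) powr s" using k2 q s by blast
    also have "\<dots> = W * r powr (-(bb + 1))" unfolding A_eq[OF conjunct1[OF q] s(1)] W_def bb_def
      by (simp add: algebra_simps)
    also have "\<dots> \<le> W * (\<zeta>/2) powr (-(bb + 1))"
      using rin z0 bpos unfolding bb_def by (intro mult_left_mono[OF _ W0] powr_mono2') auto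
    finally show ?thesis using rin unfolding K_def by simp
  qed
  have "norm (integral {0..\<tau>} (\<lambda>r. D r p)) \<le> K * (\<zeta> - \<zeta>/2)"
  proof -
    have zz: "\<zeta>/2 \<le> \<zeta>" using z0 by simp
    show ?thesis by (rule int_bound[OF _ K0 zz]) (rule fb)
  qed
  also have "K * (\<zeta> - \<zeta>/2) = W * (\<zeta>/2) powr (-bb)"
  proof -
    have "(\<zeta>/2) powr (-(bb + 1)) * (\<zeta>/2) = (\<zeta>/2) powr (-(bb+1)) * (\<zeta>/2) powr 1" using z0 by simp
    also have "\<dots> = (\<zeta>/2) powr (-bb)" by (simp only: powr_add[symmetric]) simp
    finally show ?thesis unfolding K_def by (simp add: ac_simps)
  qed
  finally show ?thesis using p1 z0 unfolding D_def W_def bb_def \<zeta>_def by simp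
qed


lemma wL_bound:
  fixes J :: "real \<Rightarrow> ('n::finite) pt \<Rightarrow> 'b::euclidean_space" and h :: "real^'n"
  assumes kg: "kgood \<beta> (\<lambda>r. delta_y h (J r)) h a C" and b: "1 < \<beta>" and C: "0 \<le> C"
    and s: "0 < s" "s \<le> 1" and bpos: "0 < a - 1 + \<beta> * s"
  shows "wLnorm (Qdim CARD('n) \<beta> / (a - 1 + \<beta> * s)) (\<lambda>p. integral {0..\<tau>} (\<lambda>r. delta_y h (J r) p))
     \<le> ennreal (C * (Vbox \<beta> CARD('n) * 2 powr Qdim CARD('n) \<beta>) powr ((a - 1 + \<beta> * s) / Qdim CARD('n) \<beta>) * norm h powr s)"
proof -
  define F where "F = (\<lambda>p. integral {0..\<tau>} (\<lambda>r. delta_y h (J r) p))"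
  define W where "W = C * norm h powr s"
  define bb where "bb = a - 1 + \<beta> * s"
  define Q where "Q = Qdim CARD('n) \<beta>"
  define V where "V = Vbox \<beta> CARD('n)"
  define E where "E = (V * 2 powr Q) powr (bb / Q)"
  have W0: "0 \<le> W" unfolding W_def using C by simp
  have Q0: "0 < Q" unfolding Q_def using Qdim_pos[OF b] .
  have V0: "0 \<le> V" unfolding V_def using Vbox_nonneg[OF b] .
  have bb0: "0 < bb" unfolding bb_def using bpos .
  have E0: "0 \<le> E" unfolding E_def by simp
  have A: "F p \<noteq> 0 \<Longrightarrow> fst p < 0 \<and> p \<in> BoxS \<beta> (- fst p) h \<and> norm (F p) \<le> W * (- fst p / 2) powr (- bb)" for p
    unfolding F_def W_def bb_def using stepA[OF kg b C s bpos] by blast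
  have th: "1 / (Q / bb) = bb / Q" by simp
  have main: "ennreal lam * ennpowr (emeasure lborel {x. lam < norm (F x)}) (1 / (Q / bb)) \<le> ennreal (E * W)"
    if l: "0 < lam" for lam
  proof (cases "W = 0")
    case True
    have e: "{x. lam < norm (F x)} = {}"
    proof -
      have "\<not> lam < norm (F x)" for x
      proof (cases "F x = 0")
        case True then show ?thesis using l by simp
      next
        case False then show ?thesis using A[OF False] \<open>W = 0\<close> l by simp
      qed
      then show ?thesis by blast
    qed
    show ?thesis unfolding e using Q0 bb0 by (simp add: ennpowr_def)
  next
    case False
    then have Wp: "0 < W" using W0 by simp
    define R where "R = (W / lam) powr (1 / bb)"
    have R0: "0 < R" unfolding R_def using Wp l by simp
    have sub: "{x. lam < norm (F x)} \<subseteq> BoxS \<beta> (2*R) h"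
    proof
      fix x assume "x \<in> {x. lam < norm (F x)}"
      then have lx: "lam < norm (F x)" by simp
      then have nz: "F x \<noteq> 0" using l by auto
      note Ax = A[OF nz]
      define z where "z = - fst x / 2"
      have z0: "0 < z" unfolding z_def using Ax by simp
      have "lam < W * z powr (- bb)" using lx Ax unfolding z_def by linarith
      then have "lam * z powr bb < W" using z0 by (simp add: powr_minus field_simps)
      then have "z powr bb < W / lam" using l by (simp add: field_simps)
      then have "(z powr bb) powr (1/bb) < (W / lam) powr (1/bb)" using bb0 z0 by (intro powr_less_mono2) auto
      then have "z < R" unfolding R_def using z0 bb0 by (simp add: powr_powr)
      then have "- fst x \<le> 2*R" unfolding z_def by simp
      then have "BoxS \<beta> (- fst x) h \<subseteq> BoxS \<beta> (2*R) h" using b Ax by (intro BoxS_mono) auto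
      then show "x \<in> BoxS \<beta> (2*R) h" using Ax by blast
    qed
    have "emeasure lborel {x. lam < norm (F x)} \<le> emeasure lborel (BoxS \<beta> (2*R) h)"
      by (rule emeasure_mono[OF sub BoxS_sets])
    also have "\<dots> \<le> ennreal (V * (2*R) powr Q)"
      unfolding V_def Q_def using BoxS_meas[OF b, of "2*R" h] R0 by simp
    finally have em: "emeasure lborel {x. lam < norm (F x)} \<le> ennreal (V * (2*R) powr Q)" .
    have "ennpowr (emeasure lborel {x. lam < norm (F x)}) (1 / (Q / bb)) \<le> ennpowr (ennreal (V * (2*R) powr Q)) (bb / Q)"
      unfolding th using em Q0 bb0 by (intro ennpowr_mono) auto
    also have "\<dots> = ennreal ((V * (2*R) powr Q) powr (bb / Q))" using V0 by (intro ennpowr_ennreal) simp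
    also have "(V * (2*R) powr Q) powr (bb / Q) = E * (W / lam)"
    proof -
      have "(V * (2*R) powr Q) powr (bb / Q) = (V * 2 powr Q * R powr Q) powr (bb / Q)"
        using R0 by (simp add: powr_mult mult.assoc)
      also have "\<dots> = (V * 2 powr Q) powr (bb / Q) * (R powr Q) powr (bb / Q)"
        using V0 by (simp add: powr_mult)
      also have "(R powr Q) powr (bb / Q) = R powr bb" using Q0 by (simp add: powr_powr)
      also have "R powr bb = W / lam" unfolding R_def using bb0 Wp l by (simp add: powr_powr)
      finally show ?thesis unfolding E_def .
    qed
    finally have ep: "ennpowr (emeasure lborel {x. lam < norm (F x)}) (1 / (Q / bb)) \<le> ennreal (E * (W / lam))" .
    have "ennreal lam * ennpowr (emeasure lborel {x. lam < norm (F x)}) (1 / (Q / bb)) \<le> ennreal lam * ennreal (E * (W / lam))"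
      by (rule mult_left_mono[OF ep]) simp
    also have "\<dots> = ennreal (lam * (E * (W / lam)))" using l E0 W0 by (intro ennreal_mult[symmetric]) auto
    also have "lam * (E * (W / lam)) = E * W" using l by simp
    finally show ?thesis .
  qed
  have "wLnorm (Q / bb) F \<le> ennreal (E * W)"
    unfolding wLnorm_def by (rule SUP_least) (use main in simp)
  then show ?thesis unfolding F_def E_def W_def bb_def Q_def V_def by (simp add: ac_simps)
qed


context psi_ctx begin

lemma psi_cont: "continuous_on UNIV \<psi>"
  using iterdd_cont[OF sm, of "[]"] by simp

lemma Kr_meas:
  assumes r: "0 < r"
  shows "delta_y h (Kr \<psi> \<beta> r) \<in> borel_measurable lborel"
proof -
  define P where "P = r powr (2*\<beta>-1)"
  define E where "E = (\<lambda>p::'n pt. inverse (c0 CARD('n)) * r powr (- Qdim CARD('n) \<beta>) * (fst p / r) ^ CARD('n)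
     * \<psi> (fst p / r, blk_app (mat2 (- gd2 \<beta> r / P) (fst p / r * g2 \<beta> r / P) (gd1 \<beta> r / P) (- (fst p / r) * g1 \<beta> r / P)) (snd p)))"
  have eq: "Kr \<psi> \<beta> r = (\<lambda>p. if fst p = 0 then 0 else E p)"
  proof
    fix p :: "'n pt"
    obtain \<sigma> y w where p: "p = (\<sigma>, y, w)" by (cases p) auto
    show "Kr \<psi> \<beta> r p = (if fst p = 0 then 0 else E p)"
    proof (cases "\<sigma> = 0")
      case True then show ?thesis unfolding p Kr_def by simp
    next
      case False
      then have t: "\<sigma> / r \<noteq> 0" using r by simp
      show ?thesis unfolding p Kr_def E_def P_def using Mmat_explicit[OF r t, of \<beta>] False by simp
    qed
  qed
  have Ec: "continuous_on UNIV E"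
    unfolding E_def blk_app_def mat2_idx
    using r by (intro continuous_intros continuous_on_compose2[OF psi_cont _ subset_UNIV]) (simp_all add: P_def)
  have Em: "E \<in> borel_measurable borel" by (rule borel_measurable_continuous_onI[OF Ec])
  have Km: "Kr \<psi> \<beta> r \<in> borel_measurable borel"
  proof -
    have cl: "closed {p::'n pt. fst p = 0}" by (intro closed_Collect_eq continuous_intros)
    have "(\<lambda>p. if p \<in> {p::'n pt. fst p = 0} then 0 else E p) \<in> borel_measurable borel"
    proof (rule measurable_If_set[OF _ Em])
      show "{p::'n pt. fst p = 0} \<inter> space borel \<in> sets borel" using borel_closed[OF cl] by simp
    qed simp
    then show ?thesis unfolding eq by simp
  qed
  have sh: "(\<lambda>p::'n pt. (fst p, fst (snd p) - h, snd (snd p))) \<in> borel_measurable borel"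
    by (intro borel_measurable_continuous_onI continuous_intros)
  have "delta_y h (Kr \<psi> \<beta> r) = (\<lambda>p. Kr \<psi> \<beta> r (fst p, fst (snd p) - h, snd (snd p)) - Kr \<psi> \<beta> r p)"
    unfolding delta_y_def by (auto simp: fun_eq_iff split: prod.splits)
  also have "\<dots> \<in> borel_measurable borel"
    using Km sh by measurable
  finally show ?thesis by simp
qed

end

lemma ennreal_le_mono_C:
  assumes "x \<le> ennreal (C1 * n)" "0 \<le> n" "C1 \<le> C2"
  shows "x \<le> ennreal (C2 * n)"
proof -
  have "C1 * n \<le> C2 * n" using assms by (simp add: mult_right_mono)
  then show ?thesis using assms(1) order_trans ennreal_leI by blast
qed

theorem lemma2p9:
  fixes \<psi> :: "'n::finite pt \<Rightarrow> real" and \<beta> :: real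
  defines "Q \<equiv> Qdim CARD('n) \<beta>"
  assumes beta: "1 < \<beta>"
    and psi_smooth: "smooth_fun \<psi>"
    and psi_nonneg: "\<And>p. 0 \<le> \<psi> p"
    and psi_mass: "(\<psi> has_integral 1) UNIV"
    and psi_supp: "closure {p. \<psi> p \<noteq> 0} \<subseteq> {-2<..<-1} \<times> ball 0 1 \<times> ball 0 1"
  shows
   "(\<forall>\<theta>::ereal. 1 \<le> \<theta> \<longrightarrow> (\<forall>s\<in>{0<..<1::real}. \<exists>C. \<forall>r>0. \<forall>h::real^'n.
        Lnorm \<theta> (delta_y h (Kr \<psi> \<beta> r))
          \<le> ennreal (C * norm h powr s * r powr (Q * (recip \<theta> - 1) - \<beta> * s))))
    \<and>
    (\<forall>s::real. 0 < s \<and> s < 1/3 \<and> 1 / (1 - s) < \<beta> \<and> \<beta> < 2 / (1 + s) \<longrightarrow>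
       (\<exists>C. \<forall>\<tau>>0. \<forall>h::real^'n.
          wLnorm (Q / (Q + \<beta> - 2 + \<beta> * s))
              (\<lambda>p. integral {0..\<tau>} (\<lambda>r. delta_y h (G0r \<psi> \<beta> r) p)) \<le> ennreal (C * norm h powr s)
        \<and> wLnorm (Q / (Q - 1 + \<beta> * s))
              (\<lambda>p. integral {0..\<tau>} (\<lambda>r. delta_y h (G1r \<psi> \<beta> r) p)) \<le> ennreal (C * norm h powr s)
        \<and> wLnorm (Q / (Q + 1 - \<beta> + \<beta> * s))
              (\<lambda>p. integral {0..\<tau>} (\<lambda>r. delta_y h (Gvr \<psi> \<beta> r) p)) \<le> ennreal (C * norm h powr s)))"
proof -
  interpret psi_ctx \<psi> \<beta> using beta psi_smooth psi_supp by unfold_locales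
  obtain B L0' where BL: "\<And>p q. \<bar>\<psi> p\<bar> \<le> B \<and> \<bar>\<psi> p - \<psi> q\<bar> \<le> L0' * norm (p - q)"
    using psi_bounds by blast
  define L where "L = max L0' 0"
  have B: "\<And>p. \<bar>\<psi> p\<bar> \<le> B" using BL by blast
  have L: "\<And>p q. \<bar>\<psi> p - \<psi> q\<bar> \<le> L * norm (p - q)"
  proof -
    fix p q :: "'n pt"
    have "L0' * norm (p - q) \<le> L * norm (p - q)" unfolding L_def by (intro mult_right_mono) auto
    then show "\<bar>\<psi> p - \<psi> q\<bar> \<le> L * norm (p - q)" using BL[of p q] by linarith
  qed
  have L0: "0 \<le> L" unfolding L_def by simp
  have B0: "0 \<le> B" using B[of 0] by linarith
  obtain Bx Lx where BLx: "\<And>p q. norm (grad_x \<psi> p) \<le> Bx \<and> norm (grad_x \<psi> p - grad_x \<psi> q) \<le> Lx * norm (p - q)"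
    using gradx_bounds by blast
  obtain Bv Lv where BLv: "\<And>p q. norm (grad_v \<psi> p) \<le> Bv \<and> norm (grad_v \<psi> p - grad_v \<psi> q) \<le> Lv * norm (p - q)"
    using gradv_bounds by blast
  define Bg where "Bg = max Bx Bv"
  define Lg where "Lg = max (max Lx Lv) 0"
  have Lg0: "0 \<le> Lg" unfolding Lg_def by simp
  have Bgx: "\<And>p. norm (grad_x \<psi> p) \<le> Bg" unfolding Bg_def using BLx by (meson max.coboundedI1 order_trans)
  have Bgv: "\<And>p. norm (grad_v \<psi> p) \<le> Bg" unfolding Bg_def using BLv by (meson max.coboundedI2 order_trans)
  have Lgx: "\<And>p q. norm (grad_x \<psi> p - grad_x \<psi> q) \<le> Lg * norm (p - q)"
  proof -
    fix p q :: "'n pt"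
    have "Lx * norm (p - q) \<le> Lg * norm (p - q)" unfolding Lg_def by (intro mult_right_mono) auto
    then show "norm (grad_x \<psi> p - grad_x \<psi> q) \<le> Lg * norm (p - q)" using BLx[of p q] by linarith
  qed
  have Lgv: "\<And>p q. norm (grad_v \<psi> p - grad_v \<psi> q) \<le> Lg * norm (p - q)"
  proof -
    fix p q :: "'n pt"
    have "Lv * norm (p - q) \<le> Lg * norm (p - q)" unfolding Lg_def by (intro mult_right_mono) auto
    then show "norm (grad_v \<psi> p - grad_v \<psi> q) \<le> Lg * norm (p - q)" using BLv[of p q] by linarith
  qed
  have Bg0: "0 \<le> Bg" using Bgx[of 0] by (meson norm_ge_zero order_trans)
  define V where "V = Vbox \<beta> CARD('n)"
  have V0: "0 \<le> V" unfolding V_def using Vbox_nonneg[OF beta] .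
  have Q0: "0 < Q" unfolding Q_def using Qdim_pos[OF beta] .
  have Qge: "2 * \<beta> \<le> Q"
  proof -
    have "1 \<le> real CARD('n)" by simp
    then have "(2*\<beta>-1) * 1 \<le> (2*\<beta>-1) * real CARD('n)" using beta by (intro mult_left_mono) auto
    then show ?thesis unfolding Q_def Qdim_def by simp
  qed
  have part1: "\<forall>\<theta>::ereal. 1 \<le> \<theta> \<longrightarrow> (\<forall>s\<in>{0<..<1::real}. \<exists>C. \<forall>r>0. \<forall>h::real^'n.
        Lnorm \<theta> (delta_y h (Kr \<psi> \<beta> r))
          \<le> ennreal (C * norm h powr s * r powr (Q * (recip \<theta> - 1) - \<beta> * s)))"
  proof (intro allI impI ballI)
    fix \<theta> :: ereal and s :: real
    assume th: "1 \<le> \<theta>" and s: "s \<in> {0<..<1}"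
    define CK where "CK = 2 ^ CARD('n) * max (2*B) (2*(\<beta>+1)*L)"
    have CK0: "0 \<le> CK" unfolding CK_def using B0 by simp
    show "\<exists>C. \<forall>r>0. \<forall>h::real^'n. Lnorm \<theta> (delta_y h (Kr \<psi> \<beta> r))
          \<le> ennreal (C * norm h powr s * r powr (Q * (recip \<theta> - 1) - \<beta> * s))"
    proof (intro exI allI impI)
      fix r :: real and h :: "real^'n" assume r: "0 < r"
      have kg: "kgood \<beta> (\<lambda>r. delta_y h (Kr \<psi> \<beta> r)) h (Qdim CARD('n) \<beta>) CK"
        unfolding CK_def by (rule K_kgood[OF B L L0])
      show "Lnorm \<theta> (delta_y h (Kr \<psi> \<beta> r)) \<le> ennreal (CK * max 1 (V * 2 powr Q) * norm h powr s * r powr (Q * (recip \<theta> - 1) - \<beta> * s))"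
        using Lnorm_bound[OF kg beta CK0 r _ _ th Kr_meas[OF r]] s unfolding V_def Q_def by simp
    qed
  qed
  have part2: "\<forall>s::real. 0 < s \<and> s < 1/3 \<and> 1 / (1 - s) < \<beta> \<and> \<beta> < 2 / (1 + s) \<longrightarrow>
       (\<exists>C. \<forall>\<tau>>0. \<forall>h::real^'n.
          wLnorm (Q / (Q + \<beta> - 2 + \<beta> * s))
              (\<lambda>p. integral {0..\<tau>} (\<lambda>r. delta_y h (G0r \<psi> \<beta> r) p)) \<le> ennreal (C * norm h powr s)
        \<and> wLnorm (Q / (Q - 1 + \<beta> * s))
              (\<lambda>p. integral {0..\<tau>} (\<lambda>r. delta_y h (G1r \<psi> \<beta> r) p)) \<le> ennreal (C * norm h powr s)
        \<and> wLnorm (Q / (Q + 1 - \<beta> + \<beta> * s))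
              (\<lambda>p. integral {0..\<tau>} (\<lambda>r. delta_y h (Gvr \<psi> \<beta> r) p)) \<le> ennreal (C * norm h powr s))"
  proof (intro allI impI)
    fix s :: real
    assume sa: "0 < s \<and> s < 1/3 \<and> 1 / (1 - s) < \<beta> \<and> \<beta> < 2 / (1 + s)"
    then have s0: "0 < s" and s1: "s \<le> 1" by auto
    have bs0: "0 \<le> \<beta> * s" using s0 beta by simp
    define C0 where "C0 = 2 ^ (CARD('n)+1) * 4 * max (2*Bg) (2*(\<beta>+1)*Lg)"
    define C1 where "C1 = 2 ^ (CARD('n)+1) * max (2*B) (2*(\<beta>+1)*L)"
    define Cv where "Cv = 2 ^ CARD('n) * (\<beta>+1)^2 * max (4*B) (4*(L+B)*(\<beta>+1))"
    have C00: "0 \<le> C0" unfolding C0_def using Bg0 by simp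
    have C10: "0 \<le> C1" unfolding C1_def using B0 by simp
    have Cv0: "0 \<le> Cv" unfolding Cv_def using B0 by simp
    define b0 where "b0 = Q + \<beta> - 2 + \<beta> * s"
    define b1 where "b1 = Q - 1 + \<beta> * s"
    define bv where "bv = Q + 1 - \<beta> + \<beta> * s"
    have b00: "0 < b0" unfolding b0_def using Qge beta bs0 by linarith
    have b10: "0 < b1" unfolding b1_def using Qge beta bs0 by linarith
    have bv0: "0 < bv" unfolding bv_def using Qge beta bs0 by linarith
    define D0 where "D0 = C0 * (V * 2 powr Q) powr (b0 / Q)"
    define D1 where "D1 = C1 * (V * 2 powr Q) powr (b1 / Q)"
    define Dv where "Dv = Cv * (V * 2 powr Q) powr (bv / Q)"
    have D00: "0 \<le> D0" "0 \<le> D1" "0 \<le> Dv" unfolding D0_def D1_def Dv_def using C00 C10 Cv0 by simp_all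
    show "\<exists>C. \<forall>\<tau>>0. \<forall>h::real^'n.
          wLnorm (Q / (Q + \<beta> - 2 + \<beta> * s))
              (\<lambda>p. integral {0..\<tau>} (\<lambda>r. delta_y h (G0r \<psi> \<beta> r) p)) \<le> ennreal (C * norm h powr s)
        \<and> wLnorm (Q / (Q - 1 + \<beta> * s))
              (\<lambda>p. integral {0..\<tau>} (\<lambda>r. delta_y h (G1r \<psi> \<beta> r) p)) \<le> ennreal (C * norm h powr s)
        \<and> wLnorm (Q / (Q + 1 - \<beta> + \<beta> * s))
              (\<lambda>p. integral {0..\<tau>} (\<lambda>r. delta_y h (Gvr \<psi> \<beta> r) p)) \<le> ennreal (C * norm h powr s)"
    proof (intro exI allI impI conjI)
      fix \<tau> :: real and h :: "real^'n" assume "0 < \<tau>"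
      have nh: "0 \<le> norm h powr s" by simp
      have kg0: "kgood \<beta> (\<lambda>r. delta_y h (G0r \<psi> \<beta> r)) h (Q + \<beta> - 1) C0"
        unfolding C0_def Q_def by (rule G0_kgood[OF Bgx Lgx Bgv Lgv Lg0])
      have kg1: "kgood \<beta> (\<lambda>r. delta_y h (G1r \<psi> \<beta> r)) h Q C1"
        unfolding C1_def Q_def by (rule G1_kgood[OF B L L0])
      have kgv: "kgood \<beta> (\<lambda>r. delta_y h (Gvr \<psi> \<beta> r)) h (Q + 2 - \<beta>) Cv"
        unfolding Cv_def Q_def by (rule Gv_kgood[OF B L L0])
      have e0: "Q + \<beta> - 1 - 1 + \<beta> * s = b0" unfolding b0_def by simp
      have e1: "Q - 1 + \<beta> * s = b1" unfolding b1_def by simp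
      have ev: "Q + 2 - \<beta> - 1 + \<beta> * s = bv" unfolding bv_def by simp
      have w0: "wLnorm (Q / b0) (\<lambda>p. integral {0..\<tau>} (\<lambda>r. delta_y h (G0r \<psi> \<beta> r) p)) \<le> ennreal (D0 * norm h powr s)"
      proof -
        have bp: "0 < Q + \<beta> - 1 - 1 + \<beta> * s" unfolding e0 by (rule b00)
        show ?thesis using wL_bound[OF kg0 beta C00 s0 s1 bp, of \<tau>, unfolded e0, folded Q_def V_def] unfolding D0_def .
      qed
      have w1: "wLnorm (Q / b1) (\<lambda>p. integral {0..\<tau>} (\<lambda>r. delta_y h (G1r \<psi> \<beta> r) p)) \<le> ennreal (D1 * norm h powr s)"
      proof -
        have bp: "0 < Q - 1 + \<beta> * s" unfolding e1 by (rule b10)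
        show ?thesis using wL_bound[OF kg1 beta C10 s0 s1 bp, of \<tau>, unfolded e1, folded Q_def V_def] unfolding D1_def .
      qed
      have wv: "wLnorm (Q / bv) (\<lambda>p. integral {0..\<tau>} (\<lambda>r. delta_y h (Gvr \<psi> \<beta> r) p)) \<le> ennreal (Dv * norm h powr s)"
      proof -
        have bp: "0 < Q + 2 - \<beta> - 1 + \<beta> * s" unfolding ev by (rule bv0)
        show ?thesis using wL_bound[OF kgv beta Cv0 s0 s1 bp, of \<tau>, unfolded ev, folded Q_def V_def] unfolding Dv_def .
      qed
      show "wLnorm (Q / (Q + \<beta> - 2 + \<beta> * s)) (\<lambda>p. integral {0..\<tau>} (\<lambda>r. delta_y h (G0r \<psi> \<beta> r) p)) \<le> ennreal ((D0 + D1 + Dv) * norm h powr s)"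
        using ennreal_le_mono_C[OF w0 nh] D00 unfolding b0_def by simp
      show "wLnorm (Q / (Q - 1 + \<beta> * s)) (\<lambda>p. integral {0..\<tau>} (\<lambda>r. delta_y h (G1r \<psi> \<beta> r) p)) \<le> ennreal ((D0 + D1 + Dv) * norm h powr s)"
        using ennreal_le_mono_C[OF w1 nh] D00 unfolding b1_def by simp
      show "wLnorm (Q / (Q + 1 - \<beta> + \<beta> * s)) (\<lambda>p. integral {0..\<tau>} (\<lambda>r. delta_y h (Gvr \<psi> \<beta> r) p)) \<le> ennreal ((D0 + D1 + Dv) * norm h powr s)"
        using ennreal_le_mono_C[OF wv nh] D00 unfolding bv_def by simp
    qed
  qed
  show ?thesis using part1 part2 by blast
qed


end
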